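(* Let $N\ge K\ge1$, $\mathbf{H}\in\mathbb{R}^{N\times K}$ full column rank, with orthonormal eigenvectors $\mathbf{u}_1,\ldots,\mathbf{u}_N$ of $\mathbf{H}\mathbf{H}^T$, $\mathbf{H}\mathbf{H}^T\mathbf{u}_i=\rho_i^2\mathbf{u}_i$, $\rho_1^2\ge\cdots\ge\rho_N^2\ge0$, $\rho_1^2>\rho_N^2$. Let $1\le M_1\le N$, $M=M_1$, and use only the measurement matrix $\boldsymbol{\Phi}_s=\frac{1}{\sqrt{M_1}}\mathbf{T}_s[\mathbf{u}_1,\ldots,\mathbf{u}_{M_1}]^T$ with $\mathbf{T}_s$ an $M_1\times M_1$ orthogonal matrix. Assume the noise variance $\sigma_0^2$ is known and, for $\gamma>0$, consider the test deciding $\mathcal{H}_1$ when $$\mathcal{T}=\frac{\sum_{n=1}^{N_b}\mathbf{z}_s[n]^T\mathbf{z}_s[n]}{\sigma_0^2/M_1}>\gamma.$$ Then $P_{FA}=\mathbb{Q}_{\chi^2(M_1N_b)}(\gamma)$ and $$\mathbb{Q}_{\chi^2(M_1N_b)}(\eta'_{lb}\gamma)\le P_D\le\mathbb{Q}_{\chi^2(M_1N_b)}(\eta'_{ub}\gamma),$$ where $\eta'_{lb}=\frac{\sigma_0^2}{\sigma_0^2+\sigma_x^2\rho_{M_1}^2}$ and $\eta'_{ub}=\frac{\sigma_0^2}{\sigma_0^2+\sigma_x^2\rho_1^2}$.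
   Context: Observations over $n=1,\ldots,N_b$: rows $\boldsymbol{\phi}_m^T$ of $\boldsymbol{\Phi}_s$ represent $M_1$ devices; under $\mathcal{H}_0$ device $m$ outputs $z_m[n]=\boldsymbol{\phi}_m^T\mathbf{w}_m[n]$, under $\mathcal{H}_1$ it outputs $z_m[n]=\boldsymbol{\phi}_m^T(\mathbf{H}\mathbf{x}[n]+\mathbf{w}_m[n])$, with $\mathbf{x}[n]\sim\mathcal{N}(\mathbf{0}_{K,1},\sigma_x^2\mathbf{I}_K)$, $\mathbf{w}_m[n]\sim\mathcal{N}(\mathbf{0}_{N,1},\sigma_0^2\mathbf{I}_N)$, $\sigma_0^2>0$, all mutually independent across $m,n$; $\mathbf{z}_s[n]=(z_1[n],\ldots,z_{M_1}[n])^T$. $P_{FA}=\Pr(\mathcal{T}>\gamma\mid\mathcal{H}_0)$, $P_D=\Pr(\mathcal{T}>\gamma\mid\mathcal{H}_1)$; $\mathbb{Q}_{\chi^2(d)}(x)=\Pr(X>x)$ for $X$ chi-squared with $d$ degrees of freedom. *)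

theory Defs
  imports "HOL-Probability.Probability"
begin

definition chi2_density :: "nat \<Rightarrow> real \<Rightarrow> real" where
  "chi2_density d t =
     (if t > 0 then t powr (real d / 2 - 1) * exp (- t / 2) / (2 powr (real d / 2) * Gamma (real d / 2))
      else 0)"

definition Qchi2 :: "nat \<Rightarrow> real \<Rightarrow> real" where
  "Qchi2 d x = (LINT t:{x<..}|lborel. chi2_density d t)"

text \<open>Matrices are functions nat => nat => real with explicit index bounds (0-based).
  Measurement matrix Phi_s = (1/sqrt M1) T_s [u_1 ... u_M1]^T; u l is the l-th eigenvector
  (0-based), with components u l j, j < N.\<close>

definition Phi_s :: "nat \<Rightarrow> (nat \<Rightarrow> nat \<Rightarrow> real) \<Rightarrow> (nat \<Rightarrow> nat \<Rightarrow> real) \<Rightarrow> nat \<Rightarrow> nat \<Rightarrow> real" where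
  "Phi_s M1 T u m j = (1 / sqrt (real M1)) * (\<Sum>l<M1. T m l * u l j)"

text \<open>Output of device m at time n. hyp = False: H0, hyp = True: H1.
  x[n]_k = sigma_x * X n k omega, w_m[n]_j = sigma_0 * W m n j omega, with X, W i.i.d. standard normal.\<close>

definition z_out :: "bool \<Rightarrow> nat \<Rightarrow> nat \<Rightarrow> (nat \<Rightarrow> nat \<Rightarrow> real) \<Rightarrow> (nat \<Rightarrow> nat \<Rightarrow> real) \<Rightarrow> real \<Rightarrow> real
     \<Rightarrow> (nat \<Rightarrow> nat \<Rightarrow> 'a \<Rightarrow> real) \<Rightarrow> (nat \<Rightarrow> nat \<Rightarrow> nat \<Rightarrow> 'a \<Rightarrow> real) \<Rightarrow> nat \<Rightarrow> nat \<Rightarrow> 'a \<Rightarrow> real" where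
  "z_out hyp N K Phi H sx s0 X W m n \<omega> =
     (\<Sum>j<N. Phi m j * ((if hyp then (\<Sum>k<K. H j k * (sx * X n k \<omega>)) else 0) + s0 * W m n j \<omega>))"

definition test_stat :: "bool \<Rightarrow> nat \<Rightarrow> nat \<Rightarrow> nat \<Rightarrow> nat \<Rightarrow> (nat \<Rightarrow> nat \<Rightarrow> real) \<Rightarrow> (nat \<Rightarrow> nat \<Rightarrow> real)
     \<Rightarrow> real \<Rightarrow> real \<Rightarrow> (nat \<Rightarrow> nat \<Rightarrow> 'a \<Rightarrow> real) \<Rightarrow> (nat \<Rightarrow> nat \<Rightarrow> nat \<Rightarrow> 'a \<Rightarrow> real) \<Rightarrow> 'a \<Rightarrow> real" where
  "test_stat hyp N K M1 Nb Phi H sx s0 X W \<omega> =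
     (\<Sum>n<Nb. \<Sum>m<M1. (z_out hyp N K Phi H sx s0 X W m n \<omega>)\<^sup>2) / (s0\<^sup>2 / real M1)"

end

theory Submission
  imports Defs
begin


lemma shear2_lborel:
  "distr (lborel \<Otimes>\<^sub>M lborel) (lborel \<Otimes>\<^sub>M lborel) (\<lambda>(x::real,y::real). (x, y + a*x)) = lborel \<Otimes>\<^sub>M lborel"
proof (rule measure_eqI)
  fix A assume A: "A \<in> sets (distr (lborel \<Otimes>\<^sub>M lborel) (lborel \<Otimes>\<^sub>M lborel) (\<lambda>(x::real,y::real). (x, y + a*x)))"
  then have A': "A \<in> sets (lborel \<Otimes>\<^sub>M lborel)" by simp
  have m: "(\<lambda>(x::real,y::real). (x, y + a*x)) \<in> measurable (lborel \<Otimes>\<^sub>M lborel) (lborel \<Otimes>\<^sub>M lborel)"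
    by measurable
  have A2: "(\<lambda>(x::real,y::real). (x, y + a*x)) -` A \<inter> space (lborel \<Otimes>\<^sub>M lborel) \<in> sets (lborel \<Otimes>\<^sub>M lborel)"
    using m A' by (rule measurable_sets)
  have "emeasure (distr (lborel \<Otimes>\<^sub>M lborel) (lborel \<Otimes>\<^sub>M lborel) (\<lambda>(x::real,y::real). (x, y + a*x))) A
     = emeasure (lborel \<Otimes>\<^sub>M lborel) ((\<lambda>(x::real,y::real). (x, y + a*x)) -` A \<inter> space (lborel \<Otimes>\<^sub>M lborel))"
    using m A' by (rule emeasure_distr)
  also have "\<dots> = (\<integral>\<^sup>+x. emeasure lborel (Pair x -` ((\<lambda>(x::real,y::real). (x, y + a*x)) -` A \<inter> space (lborel \<Otimes>\<^sub>M lborel))) \<partial>lborel)"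
    using A2 by (rule lborel.emeasure_pair_measure_alt)
  also have "\<dots> = (\<integral>\<^sup>+x. emeasure lborel (Pair x -` A) \<partial>lborel)"
  proof (rule nn_integral_cong)
    fix x :: real
    have sA: "Pair x -` A \<in> sets borel"
      using A' by (metis sets_Pair1 sets_lborel)
    have "Pair x -` ((\<lambda>(x::real,y::real). (x, y + a*x)) -` A \<inter> space (lborel \<Otimes>\<^sub>M lborel))
        = (+) (a*x) -` (Pair x -` A) \<inter> space lborel"
      by (auto simp: space_pair_measure add.commute)
    also have "emeasure lborel \<dots> = emeasure (distr lborel borel ((+) (a*x))) (Pair x -` A)"
      using sA by (subst emeasure_distr) auto
    also have "\<dots> = emeasure lborel (Pair x -` A)"
      by (simp add: lborel_distr_plus)
    finally show "emeasure lborel (Pair x -` ((\<lambda>(x::real,y::real). (x, y + a*x)) -` A \<inter> space (lborel \<Otimes>\<^sub>M lborel))) = emeasure lborel (Pair x -` A)" .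
  qed
  also have "\<dots> = emeasure (lborel \<Otimes>\<^sub>M lborel) A"
    using A' by (rule lborel.emeasure_pair_measure_alt[symmetric])
  finally show "emeasure (distr (lborel \<Otimes>\<^sub>M lborel) (lborel \<Otimes>\<^sub>M lborel) (\<lambda>(x::real,y::real). (x, y + a*x))) A = emeasure (lborel \<Otimes>\<^sub>M lborel) A" .
qed simp

lemma shear1_lborel:
  "distr (lborel \<Otimes>\<^sub>M lborel) (lborel \<Otimes>\<^sub>M lborel) (\<lambda>(x::real,y::real). (x + a*y, y)) = lborel \<Otimes>\<^sub>M lborel"
proof (rule measure_eqI)
  fix A assume A: "A \<in> sets (distr (lborel \<Otimes>\<^sub>M lborel) (lborel \<Otimes>\<^sub>M lborel) (\<lambda>(x::real,y::real). (x + a*y, y)))"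
  then have A': "A \<in> sets (lborel \<Otimes>\<^sub>M lborel)" by simp
  have m: "(\<lambda>(x::real,y::real). (x + a*y, y)) \<in> measurable (lborel \<Otimes>\<^sub>M lborel) (lborel \<Otimes>\<^sub>M lborel)"
    by measurable
  have A2: "(\<lambda>(x::real,y::real). (x + a*y, y)) -` A \<inter> space (lborel \<Otimes>\<^sub>M lborel) \<in> sets (lborel \<Otimes>\<^sub>M lborel)"
    using m A' by (rule measurable_sets)
  have "emeasure (distr (lborel \<Otimes>\<^sub>M lborel) (lborel \<Otimes>\<^sub>M lborel) (\<lambda>(x::real,y::real). (x + a*y, y))) A
     = emeasure (lborel \<Otimes>\<^sub>M lborel) ((\<lambda>(x::real,y::real). (x + a*y, y)) -` A \<inter> space (lborel \<Otimes>\<^sub>M lborel))"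
    using m A' by (rule emeasure_distr)
  also have "\<dots> = (\<integral>\<^sup>+y. emeasure lborel ((\<lambda>x. (x, y)) -` ((\<lambda>(x::real,y::real). (x + a*y, y)) -` A \<inter> space (lborel \<Otimes>\<^sub>M lborel))) \<partial>lborel)"
    using A2 by (rule lborel_pair.emeasure_pair_measure_alt2)
  also have "\<dots> = (\<integral>\<^sup>+y. emeasure lborel ((\<lambda>x. (x, y)) -` A) \<partial>lborel)"
  proof (rule nn_integral_cong)
    fix y :: real
    have sA: "(\<lambda>x. (x, y)) -` A \<in> sets borel"
      using A' by (metis sets_Pair2 sets_lborel)
    have "(\<lambda>x. (x, y)) -` ((\<lambda>(x::real,y::real). (x + a*y, y)) -` A \<inter> space (lborel \<Otimes>\<^sub>M lborel))
        = (+) (a*y) -` ((\<lambda>x. (x, y)) -` A) \<inter> space lborel"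
      by (auto simp: space_pair_measure add.commute)
    also have "emeasure lborel \<dots> = emeasure (distr lborel borel ((+) (a*y))) ((\<lambda>x. (x, y)) -` A)"
      using sA by (subst emeasure_distr) auto
    also have "\<dots> = emeasure lborel ((\<lambda>x. (x, y)) -` A)"
      by (simp add: lborel_distr_plus)
    finally show "emeasure lborel ((\<lambda>x. (x, y)) -` ((\<lambda>(x::real,y::real). (x + a*y, y)) -` A \<inter> space (lborel \<Otimes>\<^sub>M lborel))) = emeasure lborel ((\<lambda>x. (x, y)) -` A)" .
  qed
  also have "\<dots> = emeasure (lborel \<Otimes>\<^sub>M lborel) A"
    using A' by (rule lborel_pair.emeasure_pair_measure_alt2[symmetric])
  finally show "emeasure (distr (lborel \<Otimes>\<^sub>M lborel) (lborel \<Otimes>\<^sub>M lborel) (\<lambda>(x::real,y::real). (x + a*y, y))) A = emeasure (lborel \<Otimes>\<^sub>M lborel) A" .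
qed simp


lemma rot_lborel_s:
  fixes c s :: real
  assumes cs: "c\<^sup>2 + s\<^sup>2 = 1" and s: "s \<noteq> 0"
  shows "distr (lborel \<Otimes>\<^sub>M lborel) (lborel \<Otimes>\<^sub>M lborel) (\<lambda>(x::real,y::real). (c*x + s*y, -s*x + c*y)) = lborel \<Otimes>\<^sub>M lborel"
proof -
  define t where "t = (1 - c) / s"
  let ?A = "\<lambda>(x::real,y::real). (x + t*y, y)"
  let ?B = "\<lambda>(x::real,y::real). (x, y + (-s)*x)"
  let ?L = "lborel \<Otimes>\<^sub>M lborel :: (real \<times> real) measure"
  have mA: "?A \<in> measurable ?L ?L" by measurable
  have mB: "?B \<in> measurable ?L ?L" by measurable
  have eq: "(\<lambda>(x::real,y::real). (c*x + s*y, -s*x + c*y)) = ?A \<circ> (?B \<circ> ?A)"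
  proof -
    have 1: "1 - t * s = c" using s by (simp add: t_def)
    have 2: "t + t + t*(-s)*t = s"
    proof -
      have "t + t + t*(-s)*t = t * (2 - t * s)" by (simp add: algebra_simps)
      also have "\<dots> = t * (1 + c)" using 1 by simp
      also have "\<dots> = (1 - c\<^sup>2) / s" using s by (simp add: t_def power2_eq_square algebra_simps)
      also have "\<dots> = s" using cs s by (simp add: power2_eq_square field_simps)
      finally show ?thesis .
    qed
    show ?thesis
    proof (rule ext, clarsimp)
      fix x y :: real
      have a: "x + t*y + t*(y - s*(x + t*y)) = c*x + s*y"
      proof -
        have "x + t*y + t*(y - s*(x + t*y)) = (1 - t * s)*x + (t + t + t*(-s)*t)*y"
          by (simp add: algebra_simps)
        then show ?thesis using 1 2 by simp
      qed
      have b: "y - s*(x + t*y) = c*y - s*x"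
      proof -
        have "y - s*(x + t*y) = (1 - t * s)*y - s*x" by (simp add: algebra_simps)
        then show ?thesis using 1 by simp
      qed
      show "c*x + s*y = x + t*y + t*(y - s*(x + t*y)) \<and> c*y - s*x = y - s*(x + t*y)"
        using a b by simp
    qed
  qed
  have d1: "distr ?L ?L ?A = ?L" by (rule shear1_lborel)
  have d2: "distr ?L ?L ?B = ?L" by (rule shear2_lborel)
  have "distr ?L ?L (?B \<circ> ?A) = distr (distr ?L ?L ?A) ?L ?B"
    using mB mA by (rule distr_distr[symmetric])
  then have d3: "distr ?L ?L (?B \<circ> ?A) = ?L" using d1 d2 by simp
  have mBA: "?B \<circ> ?A \<in> measurable ?L ?L" using mA mB by (rule measurable_comp)
  have "distr ?L ?L (?A \<circ> (?B \<circ> ?A)) = distr (distr ?L ?L (?B \<circ> ?A)) ?L ?A"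
    using mA mBA by (rule distr_distr[symmetric])
  then have "distr ?L ?L (?A \<circ> (?B \<circ> ?A)) = ?L" using d3 d1 by simp
  then show ?thesis unfolding eq .
qed


lemma rot_lborel:
  fixes c s :: real
  assumes cs: "c\<^sup>2 + s\<^sup>2 = 1"
  shows "distr (lborel \<Otimes>\<^sub>M lborel) (lborel \<Otimes>\<^sub>M lborel) (\<lambda>(x::real,y::real). (c*x + s*y, -s*x + c*y)) = lborel \<Otimes>\<^sub>M lborel"
proof (cases "s = 0")
  case False then show ?thesis using rot_lborel_s[OF cs] by simp
next
  case True
  let ?L = "lborel \<Otimes>\<^sub>M lborel :: (real \<times> real) measure"
  from True cs have "c = 1 \<or> c = -1" by (simp add: power2_eq_1_iff)
  then show ?thesis
  proof
    assume "c = 1"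
    then have "(\<lambda>(x::real,y::real). (c*x + s*y, -s*x + c*y)) = (\<lambda>z. z)" using True by auto
    then show ?thesis by (simp add: distr_id)
  next
    assume c: "c = -1"
    let ?R = "\<lambda>(x::real,y::real). (0*x + 1*y, -1*x + 0*y)"
    have mR: "?R \<in> measurable ?L ?L" by measurable
    have r: "distr ?L ?L ?R = ?L" using rot_lborel_s[of 0 1] by simp
    have eq: "(\<lambda>(x::real,y::real). (c*x + s*y, -s*x + c*y)) = ?R \<circ> ?R" using True c by auto
    have "distr ?L ?L (?R \<circ> ?R) = distr (distr ?L ?L ?R) ?L ?R"
      using mR mR by (rule distr_distr[symmetric])
    then have "distr ?L ?L (?R \<circ> ?R) = ?L" using r by simp
    then show ?thesis unfolding eq .
  qed
qed

definition stdN :: "real measure" where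
  "stdN = density lborel (\<lambda>x. ennreal (std_normal_density x))"

lemma sets_stdN[simp, measurable_cong]: "sets stdN = sets borel"
  by (simp add: stdN_def)

lemma space_stdN[simp]: "space stdN = UNIV"
  by (simp add: stdN_def)

lemma prob_space_stdN: "prob_space stdN"
  unfolding stdN_def by (rule prob_space_normal_density) simp

lemma rot_stdN:
  fixes c s :: real
  assumes cs: "c\<^sup>2 + s\<^sup>2 = 1"
  shows "distr (stdN \<Otimes>\<^sub>M stdN) (stdN \<Otimes>\<^sub>M stdN) (\<lambda>(x::real,y::real). (c*x + s*y, -s*x + c*y)) = stdN \<Otimes>\<^sub>M stdN"
proof -
  let ?L = "lborel \<Otimes>\<^sub>M lborel :: (real \<times> real) measure"
  let ?\<rho> = "\<lambda>(x::real,y::real). (c*x + s*y, -s*x + c*y)"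
  let ?f = "\<lambda>(x::real,y::real). ennreal (std_normal_density x) * ennreal (std_normal_density y)"
  have NN: "stdN \<Otimes>\<^sub>M stdN = density ?L ?f"
    unfolding stdN_def
    by (rule pair_measure_density) (auto intro: sigma_finite_lborel prob_space_imp_sigma_finite[OF prob_space_stdN[unfolded stdN_def]])
  have m\<rho>: "?\<rho> \<in> measurable ?L ?L" by measurable
  have mf: "?f \<in> borel_measurable ?L" by measurable
  have finv: "?f (?\<rho> z) = ?f z" for z
  proof (cases z)
    case (Pair x y)
    have sq: "(c*x + s*y)\<^sup>2 + (-s*x + c*y)\<^sup>2 = x\<^sup>2 + y\<^sup>2"
    proof -
      have "(c*x + s*y)\<^sup>2 + (-s*x + c*y)\<^sup>2 = (c\<^sup>2 + s\<^sup>2) * (x\<^sup>2 + y\<^sup>2)"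
        by (simp add: power2_eq_square algebra_simps)
      then show ?thesis using cs by simp
    qed
    have "std_normal_density (c*x + s*y) * std_normal_density (-s*x + c*y) =
          std_normal_density x * std_normal_density y"
    proof -
      have "std_normal_density (c*x + s*y) * std_normal_density (-s*x + c*y) =
            (1 / sqrt (2 * pi))\<^sup>2 * exp (- ((c*x + s*y)\<^sup>2 + (-s*x + c*y)\<^sup>2) / 2)"
        by (simp add: std_normal_density_def power2_eq_square exp_add[symmetric] field_simps)
      also have "\<dots> = (1 / sqrt (2 * pi))\<^sup>2 * exp (- (x\<^sup>2 + y\<^sup>2) / 2)" using sq by simp
      also have "\<dots> = std_normal_density x * std_normal_density y"
        by (simp add: std_normal_density_def power2_eq_square exp_add[symmetric] field_simps)
      finally show ?thesis .
    qed
    then show ?thesis using Pair by (simp add: ennreal_mult[symmetric])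
  qed
  have "density ?L ?f = density (distr ?L ?L ?\<rho>) ?f" using rot_lborel[OF cs] by simp
  also have "\<dots> = distr (density ?L (\<lambda>z. ?f (?\<rho> z))) ?L ?\<rho>"
    using mf m\<rho> by (rule density_distr)
  also have "(\<lambda>z. ?f (?\<rho> z)) = ?f" using finv by (rule ext)
  finally have "distr (density ?L ?f) ?L ?\<rho> = density ?L ?f" by simp
  then show ?thesis unfolding NN
    by (subst distr_cong[of _ _ _ ?L]) auto
qed


abbreviation PN :: "'i set \<Rightarrow> ('i \<Rightarrow> real) measure" where
  "PN I \<equiv> PiM I (\<lambda>_. stdN)"

lemma prob_space_PN: "prob_space (PN I)"
  by (rule prob_space_PiM) (rule prob_space_stdN)

lemma givens_restrict_PN:
  fixes c s :: real
  assumes fin: "finite I" and ij: "i \<in> I" "j \<in> I" "i \<noteq> j" and cs: "c\<^sup>2 + s\<^sup>2 = 1"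
  shows "distr (PN I) (PN I) (\<lambda>x. \<lambda>k\<in>I. if k = i then c * x i + s * x j else if k = j then -s * x i + c * x j else x k) = PN I"
proof -
  define K where "K = I - {i, j}"
  have finK: "finite K" using fin by (simp add: K_def)
  have I: "I = insert i (insert j K)" using ij by (auto simp: K_def)
  have iK: "i \<notin> K" "j \<notin> K" by (auto simp: K_def)
  let ?NN = "stdN \<Otimes>\<^sub>M stdN"
  let ?Q = "?NN \<Otimes>\<^sub>M PN K"
  let ?\<Phi> = "\<lambda>((a::real,b::real),Y::'a\<Rightarrow>real). \<lambda>k\<in>I. if k = i then a else if k = j then b else Y k"
  let ?R = "\<lambda>x. \<lambda>k\<in>I. if k = i then c * x i + s * x j else if k = j then -s * x i + c * x j else x k"
  let ?\<rho> = "\<lambda>(x::real,y::real). (c*x + s*y, -s*x + c*y)"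
  interpret K: prob_space "PN K" by (rule prob_space_PN)
  interpret N: prob_space stdN by (rule prob_space_stdN)
  interpret NN: pair_prob_space stdN stdN ..
  interpret PS: product_prob_space "\<lambda>_::'a. stdN" by (simp add: product_prob_space_def product_sigma_finite_def prob_space_imp_sigma_finite prob_space_stdN product_prob_space_axioms_def)
  interpret Q: pair_prob_space ?NN "PN K" ..
  have m\<Phi>: "?\<Phi> \<in> measurable ?Q (PN I)"
  proof -
    have "(\<lambda>z. \<lambda>k\<in>I. (case z of ((a::real,b::real),Y::'a\<Rightarrow>real) \<Rightarrow> if k = i then a else if k = j then b else Y k)) \<in> measurable ?Q (PN I)"
    proof (rule measurable_restrict)
      fix k assume "k \<in> I"
      show "(\<lambda>z. case z of ((a::real,b::real),Y::'a\<Rightarrow>real) \<Rightarrow> if k = i then a else if k = j then b else Y k) \<in> measurable ?Q stdN"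
      proof (cases "k = i")
        case True then show ?thesis by (simp add: case_prod_beta') measurable
      next
        case False
        show ?thesis
        proof (cases "k = j")
          case True then show ?thesis using False by (simp add: case_prod_beta') measurable
        next
          case F2: False
          then have "k \<in> K" using \<open>k \<in> I\<close> False by (simp add: K_def)
          then show ?thesis using False F2 by (simp add: case_prod_beta') measurable
        qed
      qed
    qed
    then show ?thesis by (simp add: case_prod_beta')
  qed
  have mR: "?R \<in> measurable (PN I) (PN I)"
  proof (rule measurable_restrict)
    fix k assume "k \<in> I"
    show "(\<lambda>x. if k = i then c * x i + s * x j else if k = j then -s * x i + c * x j else x k) \<in> measurable (PN I) stdN"
      using ij \<open>k \<in> I\<close> by measurable
  qed
  have m\<rho>: "(\<lambda>(x,y). (?\<rho> x, y)) \<in> measurable ?Q ?Q" by measurable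
  have PI: "distr ?Q (PN I) ?\<Phi> = PN I"
  proof (rule product_sigma_finite.PiM_eqI)
    show "product_sigma_finite (\<lambda>_. stdN)"
      by (simp add: product_sigma_finite_def prob_space_imp_sigma_finite prob_space_stdN)
    show "finite I" by fact
    show "sets (distr ?Q (PN I) ?\<Phi>) = sets (PN I)" by simp
    fix A assume A: "\<And>k. k \<in> I \<Longrightarrow> A k \<in> sets stdN"
    have "?\<Phi> -` Pi\<^sub>E I A \<inter> space ?Q = (A i \<times> A j) \<times> Pi\<^sub>E K A"
    proof (intro set_eqI iffI)
      fix z assume z: "z \<in> ?\<Phi> -` Pi\<^sub>E I A \<inter> space ?Q"
      obtain a b Y where zz: "z = ((a,b),Y)" by (metis prod.collapse)
      have Y: "Y \<in> extensional K" using z zz by (simp add: space_pair_measure space_PiM PiE_def)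
      have P: "(\<lambda>k\<in>I. if k = i then a else if k = j then b else Y k) \<in> Pi\<^sub>E I A" using z zz by simp
      have "a \<in> A i" using P ij by (auto simp: PiE_def Pi_def)
      moreover have "b \<in> A j" using P ij by (force simp: PiE_def Pi_def)
      moreover have "Y \<in> Pi\<^sub>E K A"
      proof -
        have "Y k \<in> A k" if "k \<in> K" for k
        proof -
          have "k \<in> I" "k \<noteq> i" "k \<noteq> j" using that iK I by auto
          then show ?thesis using P by (force simp: PiE_def Pi_def)
        qed
        then show ?thesis using Y by (simp add: PiE_def Pi_def)
      qed
      ultimately show "z \<in> (A i \<times> A j) \<times> Pi\<^sub>E K A" using zz by simp
    next
      fix z assume z: "z \<in> (A i \<times> A j) \<times> Pi\<^sub>E K A"
      obtain a b Y where zz: "z = ((a,b),Y)" by (metis prod.collapse)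
      have a: "a \<in> A i" and b: "b \<in> A j" and Y: "Y \<in> Pi\<^sub>E K A" using z zz by auto
      have "(\<lambda>k\<in>I. if k = i then a else if k = j then b else Y k) \<in> Pi\<^sub>E I A"
      proof (rule PiE_I)
        fix k assume k: "k \<in> I"
        show "(\<lambda>k\<in>I. if k = i then a else if k = j then b else Y k) k \<in> A k"
        proof -
          have "k \<noteq> i \<Longrightarrow> k \<noteq> j \<Longrightarrow> k \<in> K" using k by (simp add: K_def)
          then show ?thesis using a b Y k by (auto simp: PiE_def Pi_def)
        qed
      qed auto
      moreover have "z \<in> space ?Q" using Y zz by (simp add: space_pair_measure space_PiM PiE_def Pi_def)
      ultimately show "z \<in> ?\<Phi> -` Pi\<^sub>E I A \<inter> space ?Q" using zz by simp
    qed
    then have "emeasure (distr ?Q (PN I) ?\<Phi>) (Pi\<^sub>E I A) = emeasure ?Q ((A i \<times> A j) \<times> Pi\<^sub>E K A)"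
      using A m\<Phi> by (subst emeasure_distr) (auto intro!: sets_PiM_I_finite fin)
    also have "\<dots> = emeasure ?NN (A i \<times> A j) * emeasure (PN K) (Pi\<^sub>E K A)"
      using A ij I by (intro K.emeasure_pair_measure_Times) (auto intro!: sets_PiM_I_finite finK)
    also have "\<dots> = emeasure stdN (A i) * emeasure stdN (A j) * (\<Prod>k\<in>K. emeasure stdN (A k))"
      using A ij I finK by (subst N.emeasure_pair_measure_Times) (auto simp: PS.emeasure_PiM intro!: sets_PiM_I_finite)
    also have "\<dots> = (\<Prod>k\<in>I. emeasure stdN (A k))"
      using I iK ij finK by (simp add: mult.assoc)
    finally show "emeasure (distr ?Q (PN I) ?\<Phi>) (Pi\<^sub>E I A) = (\<Prod>k\<in>I. emeasure stdN (A k))" .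
  qed
  have Qinv: "distr ?Q ?Q (\<lambda>(x,y). (?\<rho> x, y)) = ?Q"
  proof -
    have "distr ?NN ?NN ?\<rho> \<Otimes>\<^sub>M distr (PN K) (PN K) (\<lambda>y. y) = distr ?Q ?Q (\<lambda>(x,y). (?\<rho> x, y))"
      by (rule pair_measure_distr) (auto simp: distr_id intro!: prob_space_imp_sigma_finite prob_space_PN)
    then show ?thesis using rot_stdN[OF cs] by (simp add: distr_id)
  qed
  have comm: "?R (?\<Phi> z) = ?\<Phi> ((\<lambda>(x,y). (?\<rho> x, y)) z)" for z
  proof -
    obtain a b Y where zz: "z = ((a,b),Y)" by (metis prod.collapse)
    show ?thesis unfolding zz using ij by (intro ext) auto
  qed
  have "distr (PN I) (PN I) ?R = distr (distr ?Q (PN I) ?\<Phi>) (PN I) ?R" using PI by simp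
  also have "\<dots> = distr ?Q (PN I) (?R \<circ> ?\<Phi>)" using mR m\<Phi> by (rule distr_distr)
  also have "\<dots> = distr ?Q (PN I) (?\<Phi> \<circ> (\<lambda>(x,y). (?\<rho> x, y)))"
  proof -
    have "?R \<circ> ?\<Phi> = ?\<Phi> \<circ> (\<lambda>(x,y). (?\<rho> x, y))"
      by (rule ext) (simp only: comp_apply comm)
    then show ?thesis by (rule arg_cong)
  qed
  also have "\<dots> = distr (distr ?Q ?Q (\<lambda>(x,y). (?\<rho> x, y))) (PN I) ?\<Phi>"
    using m\<Phi> m\<rho> by (rule distr_distr[symmetric])
  also have "\<dots> = PN I" using Qinv PI by simp
  finally show ?thesis .
qed


lemma orth_sum2:
  fixes q :: "'i \<Rightarrow> 'i \<Rightarrow> real"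
  assumes orth: "\<And>l l'. l \<in> I \<Longrightarrow> l' \<in> I \<Longrightarrow> (\<Sum>i\<in>I. q i l * q i l') = (if l = l' then 1 else 0)"
    and fin: "finite I"
  shows "(\<Sum>i\<in>I. (\<Sum>l\<in>I. q i l * a l) * (\<Sum>l\<in>I. q i l * b l)) = (\<Sum>l\<in>I. a l * b l)"
proof -
  have "(\<Sum>i\<in>I. (\<Sum>l\<in>I. q i l * a l) * (\<Sum>l\<in>I. q i l * b l)) = (\<Sum>i\<in>I. \<Sum>l\<in>I. \<Sum>l'\<in>I. (a l * b l') * (q i l * q i l'))"
    unfolding sum_product by (intro sum.cong refl) (simp add: algebra_simps)
  also have "\<dots> = (\<Sum>l\<in>I. \<Sum>i\<in>I. \<Sum>l'\<in>I. (a l * b l') * (q i l * q i l'))"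
    by (rule sum.swap)
  also have "\<dots> = (\<Sum>l\<in>I. \<Sum>l'\<in>I. \<Sum>i\<in>I. (a l * b l') * (q i l * q i l'))"
    by (rule sum.cong[OF refl]) (rule sum.swap)
  also have "\<dots> = (\<Sum>l\<in>I. \<Sum>l'\<in>I. (a l * b l') * (if l = l' then 1 else 0))"
    by (intro sum.cong refl) (simp add: sum_distrib_left[symmetric] orth)
  also have "\<dots> = (\<Sum>l\<in>I. a l * b l)"
    using fin by (simp add: if_distrib cong: if_cong)
  finally show ?thesis .
qed

lemma orth_sum1:
  fixes q :: "'i \<Rightarrow> 'i \<Rightarrow> real"
  assumes orth: "\<And>l l'. l \<in> I \<Longrightarrow> l' \<in> I \<Longrightarrow> (\<Sum>i\<in>I. q i l * q i l') = (if l = l' then 1 else 0)"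
    and fin: "finite I" and l: "l \<in> I"
  shows "(\<Sum>i\<in>I. q i l * (\<Sum>l'\<in>I. q i l' * b l')) = b l"
proof -
  have "(\<Sum>i\<in>I. q i l * (\<Sum>l'\<in>I. q i l' * b l')) = (\<Sum>i\<in>I. \<Sum>l'\<in>I. b l' * (q i l * q i l'))"
    by (simp add: sum_distrib_left algebra_simps)
  also have "\<dots> = (\<Sum>l'\<in>I. \<Sum>i\<in>I. b l' * (q i l * q i l'))"
    by (rule sum.swap)
  also have "\<dots> = (\<Sum>l'\<in>I. b l' * (if l = l' then 1 else 0))"
    by (intro sum.cong refl) (simp add: sum_distrib_left[symmetric] orth l)
  also have "\<dots> = b l"
    using fin l by (simp add: if_distrib cong: if_cong)
  finally show ?thesis .
qed

definition matmap :: "'i set \<Rightarrow> ('i \<Rightarrow> 'i \<Rightarrow> real) \<Rightarrow> ('i \<Rightarrow> real) \<Rightarrow> ('i \<Rightarrow> real)" where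
  "matmap I q x = (\<lambda>k\<in>I. \<Sum>l\<in>I. q k l * x l)"

lemma matmap_measurable[measurable]: "finite I \<Longrightarrow> matmap I q \<in> measurable (PN I) (PN I)"
  unfolding matmap_def by (rule measurable_restrict) measurable

definition good :: "'i set \<Rightarrow> ('i \<Rightarrow> 'i \<Rightarrow> real) \<Rightarrow> bool" where
  "good I q \<longleftrightarrow> (\<forall>l\<in>I. \<forall>l'\<in>I. (\<Sum>i\<in>I. q i l * q i l') = (if l = l' then 1 else 0))
     \<and> distr (PN I) (PN I) (matmap I q) = PN I"

lemma good_id: "finite I \<Longrightarrow> good I (\<lambda>k l. if k = l then 1 else 0)"
proof -
  assume fin: "finite I"
  have d: "(if k = l then 1 else 0) * (x l::real) = (if k = l then x l else 0)" for k l x by simp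
  have "matmap I (\<lambda>k l. if k = l then 1 else 0) x = x" if "x \<in> space (PN I)" for x
    using that fin by (auto simp: matmap_def space_PiM PiE_def extensional_def d)
  then have "distr (PN I) (PN I) (matmap I (\<lambda>k l. if k = l then 1 else 0)) = distr (PN I) (PN I) (\<lambda>x. x)"
    by (intro distr_cong) auto
  moreover have "(\<Sum>i\<in>I. (if i = l then 1 else 0) * (if i = l' then 1 else (0::real))) = (if l = l' then 1 else 0)"
    if "l \<in> I" for l l'
  proof -
    have e: "(if i = l then 1 else 0) * (if i = l' then 1 else (0::real)) = (if i = l then (if l = l' then 1 else 0) else 0)" for i
      by simp
    show ?thesis unfolding e using fin that by (simp add: sum.delta')
  qed
  ultimately show ?thesis using fin by (simp add: good_def distr_id d)
qed

lemma good_mult: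
  assumes fin: "finite I" and q: "good I q" and g: "good I g"
  shows "good I (\<lambda>k l. \<Sum>m\<in>I. g k m * q m l)"
proof -
  have oq: "\<And>l l'. l \<in> I \<Longrightarrow> l' \<in> I \<Longrightarrow> (\<Sum>i\<in>I. q i l * q i l') = (if l = l' then 1 else 0)"
    using q by (simp add: good_def)
  have og: "\<And>l l'. l \<in> I \<Longrightarrow> l' \<in> I \<Longrightarrow> (\<Sum>i\<in>I. g i l * g i l') = (if l = l' then 1 else 0)"
    using g by (simp add: good_def)
  have orth: "(\<Sum>i\<in>I. (\<Sum>m\<in>I. g i m * q m l) * (\<Sum>m\<in>I. g i m * q m l')) = (if l = l' then 1 else 0)"
    if "l \<in> I" "l' \<in> I" for l l'
    using orth_sum2[OF og fin, of "\<lambda>m. q m l" "\<lambda>m. q m l'"] oq[OF that] by simp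
  have comp: "matmap I (\<lambda>k l. \<Sum>m\<in>I. g k m * q m l) x = matmap I g (matmap I q x)" for x
  proof (rule ext)
    fix k
    show "matmap I (\<lambda>k l. \<Sum>m\<in>I. g k m * q m l) x k = matmap I g (matmap I q x) k"
    proof (cases "k \<in> I")
      case True
      have "(\<Sum>l\<in>I. (\<Sum>m\<in>I. g k m * q m l) * x l) = (\<Sum>l\<in>I. \<Sum>m\<in>I. g k m * (q m l * x l))"
        unfolding sum_distrib_right by (intro sum.cong refl) (simp add: algebra_simps)
      also have "\<dots> = (\<Sum>m\<in>I. \<Sum>l\<in>I. g k m * (q m l * x l))" by (rule sum.swap)
      also have "\<dots> = (\<Sum>m\<in>I. g k m * (\<Sum>l\<in>I. q m l * x l))" by (simp add: sum_distrib_left)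
      finally show ?thesis using True by (simp add: matmap_def cong: sum.cong)
    qed (simp add: matmap_def)
  qed
  have "distr (PN I) (PN I) (matmap I (\<lambda>k l. \<Sum>m\<in>I. g k m * q m l)) = distr (PN I) (PN I) (matmap I g \<circ> matmap I q)"
    using comp by (intro arg_cong[where f="distr (PN I) (PN I)"]) (auto simp: fun_eq_iff)
  also have "\<dots> = distr (distr (PN I) (PN I) (matmap I q)) (PN I) (matmap I g)"
    using fin by (intro distr_distr[symmetric]) auto
  also have "\<dots> = PN I" using q g by (simp add: good_def)
  finally show ?thesis using orth by (simp add: good_def)
qed


definition givmat :: "'i \<Rightarrow> 'i \<Rightarrow> real \<Rightarrow> real \<Rightarrow> 'i \<Rightarrow> 'i \<Rightarrow> real" where
  "givmat i j c s k l = (if k = i then (if l = i then c else if l = j then s else 0)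
      else if k = j then (if l = i then -s else if l = j then c else 0) else (if k = l then 1 else 0))"

lemma good_givmat:
  fixes c s :: real
  assumes fin: "finite I" and ij: "i \<in> I" "j \<in> I" "i \<noteq> j" and cs: "c\<^sup>2 + s\<^sup>2 = 1"
  shows "good I (givmat i j c s)"
proof -
  define K where "K = I - {i, j}"
  have I: "I = insert i (insert j K)" and iK: "i \<notin> K" "j \<notin> K" and finK: "finite K"
    using ij fin by (auto simp: K_def)
  have sumI: "(\<Sum>k\<in>I. f k) = f i + f j + (\<Sum>k\<in>K. f k)" for f :: "'a \<Rightarrow> real"
    using iK ij finK by (simp add: I)
  have gK: "k \<in> K \<Longrightarrow> givmat i j c s k l = (if k = l then 1 else 0)" for k l
    using iK by (auto simp: givmat_def)
  have orth: "(\<Sum>k\<in>I. givmat i j c s k l * givmat i j c s k l') = (if l = l' then 1 else 0)"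
    if l: "l \<in> I" and l': "l' \<in> I" for l l'
  proof -
    have kpart: "(\<Sum>k\<in>K. givmat i j c s k l * givmat i j c s k l') = (if l \<in> K \<and> l = l' then 1 else 0)"
    proof -
      have "(\<Sum>k\<in>K. givmat i j c s k l * givmat i j c s k l') = (\<Sum>k\<in>K. if k = l then (if l = l' then 1 else 0) else 0)"
        by (rule sum.cong) (auto simp: gK)
      also have "\<dots> = (if l \<in> K \<and> l = l' then 1 else 0)" using finK by (auto simp: sum.delta')
      finally show ?thesis .
    qed
    have c2: "c * c + s * s = 1" using cs by (simp add: power2_eq_square)
    show ?thesis unfolding sumI kpart
      using l l' ij iK c2 I by (auto simp: givmat_def algebra_simps)
  qed
  have mm: "matmap I (givmat i j c s) x = (\<lambda>k\<in>I. if k = i then c * x i + s * x j else if k = j then -s * x i + c * x j else x k)" for x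
  proof (rule ext)
    fix k
    show "matmap I (givmat i j c s) x k = (\<lambda>k\<in>I. if k = i then c * x i + s * x j else if k = j then -s * x i + c * x j else x k) k"
    proof (cases "k \<in> I")
      case True
      have "(\<Sum>l\<in>K. givmat i j c s k l * x l) = (if k \<in> K then x k else 0)"
      proof -
        have "(\<Sum>l\<in>K. givmat i j c s k l * x l) = (\<Sum>l\<in>K. if k = l then x l else 0)"
          by (rule sum.cong) (use iK in \<open>auto simp: givmat_def\<close>)
        then show ?thesis using finK by (simp add: sum.delta)
      qed
      then show ?thesis using True ij iK I unfolding matmap_def sumI
        by (auto simp: givmat_def)
    qed (simp add: matmap_def)
  qed
  have mm': "matmap I (givmat i j c s) = (\<lambda>x. \<lambda>k\<in>I. if k = i then c * x i + s * x j else if k = j then -s * x i + c * x j else x k)"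
    using mm by (rule ext)
  show ?thesis unfolding good_def mm'
    using orth givens_restrict_PN[OF fin ij cs] by simp
qed


lemma givmat_apply:
  assumes fin: "finite I" and ij: "i \<in> I" "j \<in> I" "i \<noteq> j" and k: "k \<in> I"
  shows "(\<Sum>l\<in>I. givmat i j c s k l * x l) = (if k = i then c * x i + s * x j else if k = j then -s * x i + c * x j else x k)"
proof -
  define K where "K = I - {i, j}"
  have I: "I = insert i (insert j K)" and iK: "i \<notin> K" "j \<notin> K" and finK: "finite K"
    using ij fin by (auto simp: K_def)
  have sumI: "(\<Sum>k\<in>I. f k) = f i + f j + (\<Sum>k\<in>K. f k)" for f :: "'a \<Rightarrow> real"
    using iK ij finK by (simp add: I)
  have "(\<Sum>l\<in>K. givmat i j c s k l * x l) = (if k \<in> K then x k else 0)"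
  proof -
    have "(\<Sum>l\<in>K. givmat i j c s k l * x l) = (\<Sum>l\<in>K. if k = l then x l else 0)"
      by (rule sum.cong) (use iK in \<open>auto simp: givmat_def\<close>)
    then show ?thesis using finK by (simp add: sum.delta)
  qed
  then show ?thesis using k ij iK I unfolding sumI by (auto simp: givmat_def)
qed

lemma matmul_apply:
  fixes g q :: "'i \<Rightarrow> 'i \<Rightarrow> real"
  shows "(\<Sum>l\<in>I. (\<Sum>m\<in>I. g k m * q m l) * x l) = (\<Sum>m\<in>I. g k m * (\<Sum>l\<in>I. q m l * x l))"
proof -
  have "(\<Sum>l\<in>I. (\<Sum>m\<in>I. g k m * q m l) * x l) = (\<Sum>l\<in>I. \<Sum>m\<in>I. g k m * (q m l * x l))"
    unfolding sum_distrib_right by (intro sum.cong refl) (simp add: algebra_simps)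
  also have "\<dots> = (\<Sum>m\<in>I. \<Sum>l\<in>I. g k m * (q m l * x l))" by (rule sum.swap)
  also have "\<dots> = (\<Sum>m\<in>I. g k m * (\<Sum>l\<in>I. q m l * x l))" by (simp add: sum_distrib_left)
  finally show ?thesis .
qed

lemma good_zero:
  fixes v :: "'i \<Rightarrow> real"
  assumes fin: "finite I" and i0: "i0 \<in> I" and S: "S \<subseteq> I - {i0}"
  shows "\<exists>q. good I q \<and> (\<forall>i\<in>S. (\<Sum>l\<in>I. q i l * v l) = 0) \<and> (\<forall>i\<in>I - S - {i0}. (\<Sum>l\<in>I. q i l * v l) = v i)"
proof -
  have "finite S" using S fin by (meson finite_Diff finite_subset)
  then show ?thesis using S
  proof (induction S rule: finite_induct)
    case empty
    have d: "(if k = l then 1 else 0) * (x l::real) = (if k = l then x l else 0)" for k l x by simp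
    show ?case
      by (rule exI[of _ "\<lambda>k l. if k = l then 1 else 0"]) (simp add: good_id fin d sum.delta)
  next
    case (insert j S)
    then obtain q where q: "good I q" and z: "\<forall>i\<in>S. (\<Sum>l\<in>I. q i l * v l) = 0"
       and e: "\<forall>i\<in>I - S - {i0}. (\<Sum>l\<in>I. q i l * v l) = v i" by auto
    have j: "j \<in> I" "j \<noteq> i0" using insert by auto
    define w where "w i = (\<Sum>l\<in>I. q i l * v l)" for i
    define a where "a = w i0"
    define b where "b = w j"
    define r where "r = sqrt (a\<^sup>2 + b\<^sup>2)"
    define c where "c = (if r = 0 then 1 else a / r)"
    define s where "s = (if r = 0 then 0 else b / r)"
    have r2: "r\<^sup>2 = a\<^sup>2 + b\<^sup>2" unfolding r_def by simp
    have cs: "c\<^sup>2 + s\<^sup>2 = 1"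
    proof (cases "r = 0")
      case False
      have "c\<^sup>2 + s\<^sup>2 = (a\<^sup>2 + b\<^sup>2) / r\<^sup>2" using False by (simp add: c_def s_def power_divide add_divide_distrib)
      moreover have "r\<^sup>2 \<noteq> 0" using False by simp
      ultimately show ?thesis using r2 by simp
    qed (simp add: c_def s_def)
    have js: "-s * a + c * b = 0"
    proof (cases "r = 0")
      case True then have "a\<^sup>2 + b\<^sup>2 = 0" using r2 by simp
      then have "b = 0" by (simp add: add_nonneg_eq_0_iff)
      then show ?thesis using True by (simp add: c_def s_def)
    next
      case False then show ?thesis by (simp add: c_def s_def field_simps)
    qed
    define g where "g = givmat i0 j c s"
    have gg: "good I g" unfolding g_def using fin i0 j cs by (intro good_givmat) auto
    define q' where "q' = (\<lambda>k l. \<Sum>m\<in>I. g k m * q m l)"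
    have gq: "good I q'" unfolding q'_def using fin q gg by (rule good_mult)
    have w': "(\<Sum>l\<in>I. q' k l * v l) = (if k = i0 then c * w i0 + s * w j else if k = j then -s * w i0 + c * w j else w k)"
      if "k \<in> I" for k
      unfolding q'_def matmul_apply w_def[symmetric] g_def
      using givmat_apply[OF fin i0 j(1) j(2)[symmetric] that] .
    show ?case
    proof (intro exI[of _ q'] conjI ballI)
      show "good I q'" by fact
    next
      fix i assume i: "i \<in> insert j S"
      then have iI: "i \<in> I" "i \<noteq> i0" using insert by auto
      show "(\<Sum>l\<in>I. q' i l * v l) = 0"
      proof (cases "i = j")
        case True then show ?thesis using w'[OF iI(1)] iI js by (simp add: a_def b_def)
      next
        case False then have "i \<in> S" using i by simp
        then show ?thesis using w'[OF iI(1)] iI False z by (simp add: w_def)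
      qed
    next
      fix i assume i: "i \<in> I - insert j S - {i0}"
      then show "(\<Sum>l\<in>I. q' i l * v l) = v i" using w'[of i] e by (auto simp: w_def)
    qed
  qed
qed

lemma good_row:
  fixes v :: "'i \<Rightarrow> real"
  assumes fin: "finite I" and i0: "i0 \<in> I" and nv: "(\<Sum>i\<in>I. v i * v i) = 1"
  shows "\<exists>q \<sigma>. good I q \<and> (\<sigma> = 1 \<or> \<sigma> = -1) \<and> (\<forall>l\<in>I. q i0 l = \<sigma> * v l)"
proof -
  obtain q where q: "good I q" and z: "\<forall>i\<in>I - {i0}. (\<Sum>l\<in>I. q i l * v l) = 0"
    using good_zero[OF fin i0, of "I - {i0}" v] by auto
  have oq: "\<And>l l'. l \<in> I \<Longrightarrow> l' \<in> I \<Longrightarrow> (\<Sum>i\<in>I. q i l * q i l') = (if l = l' then 1 else 0)"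
    using q by (simp add: good_def)
  define w where "w i = (\<Sum>l\<in>I. q i l * v l)" for i
  have "(\<Sum>i\<in>I. w i * w i) = 1" using orth_sum2[OF oq fin, of v v] nv by (simp add: w_def)
  moreover have "(\<Sum>i\<in>I. w i * w i) = w i0 * w i0"
    using z fin i0 by (subst sum.remove[of I i0]) (auto simp: w_def)
  ultimately have w1: "w i0 * w i0 = 1" by simp
  then have \<sigma>: "w i0 = 1 \<or> w i0 = -1"
    by (metis mult_cancel_left1 mult_minus1_right mult_right_cancel square_eq_1_iff zero_neq_one)
  have "v l = q i0 l * w i0" if "l \<in> I" for l
  proof -
    have "v l = (\<Sum>i\<in>I. q i l * w i)" unfolding w_def using orth_sum1[OF oq fin that] by simp
    also have "\<dots> = q i0 l * w i0" using z fin i0 by (subst sum.remove[of I i0]) (auto simp: w_def)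
    finally show ?thesis .
  qed
  then have "\<forall>l\<in>I. q i0 l = w i0 * v l" using \<sigma> by auto
  then show ?thesis using q \<sigma> by blast
qed


lemma sign_stdN:
  assumes "\<sigma> = 1 \<or> \<sigma> = (-1::real)"
  shows "distr stdN stdN (\<lambda>a. \<sigma> * a) = stdN"
  using assms
proof
  assume "\<sigma> = 1" then show ?thesis by (simp add: distr_id)
next
  assume s: "\<sigma> = -1"
  have L0: "lborel = density (distr lborel borel (\<lambda>x::real. - x)) (\<lambda>_. 1)"
    using lborel_real_affine[of "-1" 0] by simp
  have L: "distr lborel borel (\<lambda>x::real. - x) = lborel"
    using L0 by (metis density_1)
  have L': "distr lborel lborel (\<lambda>x::real. - x) = lborel"
    using L by (subst distr_cong[of _ _ _ borel]) auto
  have mf: "(\<lambda>x. ennreal (std_normal_density x)) \<in> borel_measurable lborel" by measurable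
  have mn: "(\<lambda>x::real. - x) \<in> measurable lborel lborel" by measurable
  have "density lborel (\<lambda>x. ennreal (std_normal_density x)) = density (distr lborel lborel (\<lambda>x::real. - x)) (\<lambda>x. ennreal (std_normal_density x))"
    using L' by simp
  also have "\<dots> = distr (density lborel (\<lambda>x. ennreal (std_normal_density (- x)))) lborel (\<lambda>x::real. - x)"
    using mf mn by (rule density_distr)
  also have "(\<lambda>x. ennreal (std_normal_density (- x))) = (\<lambda>x. ennreal (std_normal_density x))"
    by (simp add: std_normal_density_def)
  finally have "distr (density lborel (\<lambda>x. ennreal (std_normal_density x))) lborel (\<lambda>x::real. - x) = density lborel (\<lambda>x. ennreal (std_normal_density x))"
    by simp
  then show ?thesis unfolding stdN_def s
    by (subst distr_cong[of _ _ _ lborel]) auto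
qed

lemma PN_empty_target:
  assumes fin: "finite I"
  shows "distr (PN I) (PN ({}::'b set)) (\<lambda>x. \<lambda>_. undefined) = PN {}"
proof (rule product_sigma_finite.PiM_eqI)
  show "product_sigma_finite (\<lambda>_::'b. stdN)"
    by (simp add: product_sigma_finite_def prob_space_imp_sigma_finite prob_space_stdN)
  show "finite ({}::'b set)" by simp
  show "sets (distr (PN I) (PN ({}::'b set)) (\<lambda>x. \<lambda>_. undefined)) = sets (PN {})" by simp
  fix A :: "'b \<Rightarrow> real set"
  interpret P: prob_space "PN I" by (rule prob_space_PN)
  have "emeasure (distr (PN I) (PN ({}::'b set)) (\<lambda>x. \<lambda>_. undefined)) (Pi\<^sub>E {} A)
     = emeasure (PN I) ((\<lambda>x. \<lambda>_. undefined) -` Pi\<^sub>E {} A \<inter> space (PN I))"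
    apply (rule emeasure_distr)
     apply simp
    apply (rule sets_PiM_I_finite)
     apply auto
    done
  also have "(\<lambda>x. \<lambda>_::'b. undefined) -` Pi\<^sub>E {} A \<inter> space (PN I) = space (PN I)" by auto
  finally show "emeasure (distr (PN I) (PN ({}::'b set)) (\<lambda>x. \<lambda>_. undefined)) (Pi\<^sub>E {} A) = (\<Prod>i\<in>{}. emeasure stdN (A i))"
    by (simp add: P.emeasure_space_1)
qed


lemma key_orth:
  fixes e :: "'j \<Rightarrow> 'i \<Rightarrow> real"
  assumes finJ: "finite J" and finI: "finite I"
    and orth: "\<forall>k\<in>J. \<forall>k'\<in>J. (\<Sum>i\<in>I. e k i * e k' i) = (if k = k' then 1 else 0)"
  shows "distr (PN I) (PN J) (\<lambda>x. \<lambda>k\<in>J. \<Sum>i\<in>I. e k i * x i) = PN J"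
  using finJ finI orth
proof (induction J arbitrary: I e rule: finite_induct)
  case empty
  have "(\<lambda>x. \<lambda>k\<in>({}::'j set). \<Sum>i\<in>I. e k i * x i) = (\<lambda>x. \<lambda>_. undefined)" by (simp add: restrict_def fun_eq_iff)
  then show ?case using PN_empty_target[OF empty(1)] by simp
next
  case (insert k0 J')
  note finI = insert.prems(1)
  note orth = insert.prems(2)
  define v where "v = e k0"
  have nv: "(\<Sum>i\<in>I. v i * v i) = 1" using orth by (simp add: v_def)
  then have "I \<noteq> {}" by auto
  then obtain i0 where i0: "i0 \<in> I" by auto
  obtain q \<sigma> where q: "good I q" and \<sigma>: "\<sigma> = 1 \<or> \<sigma> = -1" and row: "\<forall>l\<in>I. q i0 l = \<sigma> * v l"
    using good_row[OF finI i0 nv] by blast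
  have oq: "\<And>l l'. l \<in> I \<Longrightarrow> l' \<in> I \<Longrightarrow> (\<Sum>i\<in>I. q i l * q i l') = (if l = l' then 1 else 0)"
    using q by (simp add: good_def)
  have \<sigma>2: "\<sigma> * \<sigma> = 1" using \<sigma> by auto
  define I' where "I' = I - {i0}"
  have finI': "finite I'" using finI by (simp add: I'_def)
  have I: "I = insert i0 I'" "i0 \<notin> I'" using i0 by (auto simp: I'_def)
  define f where "f k i = (\<Sum>l\<in>I. q i l * e k l)" for k i
  have fi0: "f k i0 = 0" if "k \<in> J'" for k
  proof -
    have "f k i0 = (\<Sum>l\<in>I. \<sigma> * (e k0 l * e k l))" unfolding f_def using row
      by (intro sum.cong) (auto simp: v_def)
    also have "\<dots> = \<sigma> * (\<Sum>l\<in>I. e k0 l * e k l)" by (simp add: sum_distrib_left)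
    also have "\<dots> = 0" using orth that insert.hyps(2) by auto
    finally show ?thesis .
  qed
  have sumI: "(\<Sum>i\<in>I. h i) = h i0 + (\<Sum>i\<in>I'. h i)" for h :: "'i \<Rightarrow> real"
    using I finI' by simp
  have orth': "\<forall>k\<in>J'. \<forall>k'\<in>J'. (\<Sum>i\<in>I'. f k i * f k' i) = (if k = k' then 1 else 0)"
  proof (intro ballI)
    fix k k' assume k: "k \<in> J'" and k': "k' \<in> J'"
    have "(\<Sum>i\<in>I. f k i * f k' i) = (\<Sum>l\<in>I. e k l * e k' l)"
      unfolding f_def by (rule orth_sum2[OF oq finI])
    also have "\<dots> = (if k = k' then 1 else 0)" using orth k k' by auto
    finally show "(\<Sum>i\<in>I'. f k i * f k' i) = (if k = k' then 1 else 0)"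
      using fi0[OF k] unfolding sumI by simp
  qed
  define Lf where "Lf y = (\<lambda>k\<in>J'. \<Sum>i\<in>I'. f k i * y i)" for y :: "'i \<Rightarrow> real"
  have IH: "distr (PN I') (PN J') Lf = PN J'"
    unfolding Lf_def using insert.IH[OF finI' orth'] .
  define J where "J = insert k0 J'"
  define T where "T y = (\<lambda>k\<in>J. if k = k0 then \<sigma> * y i0 else \<Sum>i\<in>I'. f k i * y i)" for y :: "'i \<Rightarrow> real"
  define Le where "Le x = (\<lambda>k\<in>J. \<Sum>i\<in>I. e k i * x i)" for x :: "'i \<Rightarrow> real"
  define upd where "upd = (\<lambda>(a::real, X::'i \<Rightarrow> real). X(i0 := a))"
  define upd' where "upd' = (\<lambda>(b::real, Z::'j \<Rightarrow> real). Z(k0 := b))"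
  define S where "S = (\<lambda>(a::real, X::'i \<Rightarrow> real). (\<sigma> * a, Lf X))"
  have mT: "T \<in> measurable (PN I) (PN J)"
    unfolding T_def
  proof (rule measurable_restrict)
    fix k assume "k \<in> J"
    show "(\<lambda>y. if k = k0 then \<sigma> * y i0 else \<Sum>i\<in>I'. f k i * y i) \<in> measurable (PN I) stdN"
    proof (cases "k = k0")
      case True then show ?thesis using i0 by simp measurable
    next
      case False
      have "(\<lambda>y. \<Sum>i\<in>I'. f k i * y i) \<in> measurable (PN I) stdN"
        by measurable (auto simp: I'_def)
      then show ?thesis using False by simp
    qed
  qed
  have mq: "matmap I q \<in> measurable (PN I) (PN I)" using finI by measurable
  have mupd: "upd \<in> measurable (stdN \<Otimes>\<^sub>M PN I') (PN I)"
  proof -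
    have "(\<lambda>z. (\<lambda>(f, y). f(i0 := y)) (snd z, fst z)) \<in> measurable (stdN \<Otimes>\<^sub>M PN I') (PN (insert i0 I'))"
      by (rule measurable_compose[OF _ measurable_add_dim]) measurable
    then show ?thesis by (simp add: upd_def I(1) case_prod_beta')
  qed
  have mupd': "upd' \<in> measurable (stdN \<Otimes>\<^sub>M PN J') (PN J)"
  proof -
    have "(\<lambda>z. (\<lambda>(f, y). f(k0 := y)) (snd z, fst z)) \<in> measurable (stdN \<Otimes>\<^sub>M PN J') (PN (insert k0 J'))"
      by (rule measurable_compose[OF _ measurable_add_dim]) measurable
    then show ?thesis by (simp add: upd'_def J_def case_prod_beta')
  qed
  have mLf: "Lf \<in> measurable (PN I') (PN J')"
    unfolding Lf_def by (rule measurable_restrict) measurable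
  have mS: "S \<in> measurable (stdN \<Otimes>\<^sub>M PN I') (stdN \<Otimes>\<^sub>M PN J')"
    unfolding S_def using mLf by measurable
  have claim1: "Le x = T (matmap I q x)" for x
  proof (rule ext)
    fix k
    show "Le x k = T (matmap I q x) k"
    proof (cases "k \<in> J")
      case False then show ?thesis by (simp add: Le_def T_def)
    next
      case True
      show ?thesis
      proof (cases "k = k0")
        case True
        have "T (matmap I q x) k = \<sigma> * (\<Sum>l\<in>I. q i0 l * x l)"
          using True i0 by (simp add: T_def J_def matmap_def)
        also have "\<dots> = \<sigma> * (\<Sum>l\<in>I. \<sigma> * (v l * x l))" using row by (intro arg_cong[where f="(*) \<sigma>"] sum.cong) auto
        also have "\<dots> = (\<sigma> * \<sigma>) * (\<Sum>l\<in>I. v l * x l)" by (simp add: sum_distrib_left mult.assoc)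
        also have "\<dots> = Le x k" using True \<sigma>2 by (simp add: Le_def J_def v_def)
        finally show ?thesis ..
      next
        case False
        then have k: "k \<in> J'" using \<open>k \<in> J\<close> by (simp add: J_def)
        have "T (matmap I q x) k = (\<Sum>i\<in>I'. f k i * (\<Sum>l\<in>I. q i l * x l))"
          using \<open>k \<in> J\<close> False I by (simp add: T_def matmap_def)
        also have "\<dots> = (\<Sum>i\<in>I. f k i * (\<Sum>l\<in>I. q i l * x l))"
          unfolding sumI using fi0[OF k] by simp
        also have "\<dots> = (\<Sum>l\<in>I. e k l * x l)"
          unfolding f_def by (rule orth_sum2[OF oq finI])
        finally show ?thesis using \<open>k \<in> J\<close> by (simp add: Le_def)
      qed
    qed
  qed
  have claim2: "T (upd z) = upd' (S z)" if "z \<in> space (stdN \<Otimes>\<^sub>M PN I')" for z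
  proof -
    obtain a X where z: "z = (a, X)" by (metis prod.collapse)
    have "(\<Sum>i\<in>I'. f k i * (X(i0 := a)) i) = (\<Sum>i\<in>I'. f k i * X i)" for k
      using I by (intro sum.cong) auto
    then show ?thesis unfolding z
      using insert.hyps(2) by (auto simp: T_def upd_def upd'_def S_def Lf_def J_def intro!: ext)
  qed
  have D1: "distr (stdN \<Otimes>\<^sub>M PN I') (PN I) upd = PN I"
    unfolding upd_def I(1) by (rule distr_pair_PiM_eq_PiM) (auto intro: prob_space_stdN)
  have D2: "distr (stdN \<Otimes>\<^sub>M PN J') (PN J) upd' = PN J"
    unfolding upd'_def J_def by (rule distr_pair_PiM_eq_PiM) (auto intro: prob_space_stdN)
  have D3: "distr (stdN \<Otimes>\<^sub>M PN I') (stdN \<Otimes>\<^sub>M PN J') S = stdN \<Otimes>\<^sub>M PN J'"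
  proof -
    have "distr stdN stdN (\<lambda>a. \<sigma> * a) \<Otimes>\<^sub>M distr (PN I') (PN J') Lf = distr (stdN \<Otimes>\<^sub>M PN I') (stdN \<Otimes>\<^sub>M PN J') (\<lambda>(x, y). (\<sigma> * x, Lf y))"
      using mLf by (intro pair_measure_distr) (auto simp: IH intro: prob_space_imp_sigma_finite prob_space_PN)
    then show ?thesis using sign_stdN[OF \<sigma>] IH by (simp add: S_def)
  qed
  have "distr (PN I) (PN J) Le = distr (PN I) (PN J) (T \<circ> matmap I q)"
    using claim1 by (intro arg_cong[where f="distr (PN I) (PN J)"]) (auto simp: fun_eq_iff)
  also have "\<dots> = distr (distr (PN I) (PN I) (matmap I q)) (PN J) T"
    using mT mq by (rule distr_distr[symmetric])
  also have "distr (PN I) (PN I) (matmap I q) = PN I" using q by (simp add: good_def)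
  also have "distr (PN I) (PN J) T = distr (distr (stdN \<Otimes>\<^sub>M PN I') (PN I) upd) (PN J) T" using D1 by simp
  also have "\<dots> = distr (stdN \<Otimes>\<^sub>M PN I') (PN J) (T \<circ> upd)" using mT mupd by (rule distr_distr)
  also have "\<dots> = distr (stdN \<Otimes>\<^sub>M PN I') (PN J) (upd' \<circ> S)"
    by (rule distr_cong) (auto simp: claim2)
  also have "\<dots> = distr (distr (stdN \<Otimes>\<^sub>M PN I') (stdN \<Otimes>\<^sub>M PN J') S) (PN J) upd'"
    using mupd' mS by (rule distr_distr[symmetric])
  also have "\<dots> = PN J" using D3 D2 by simp
  finally show ?case unfolding Le_def J_def .
qed

lemma chi2_density_nonneg: "0 \<le> chi2_density d t"
  by (cases "d = 0") (auto simp: chi2_density_def intro!: divide_nonneg_nonneg mult_nonneg_nonneg Gamma_real_pos)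

lemma borel_measurable_chi2[measurable]: "chi2_density d \<in> borel_measurable borel"
  unfolding chi2_density_def by measurable

lemma nn_integral_chi2: 
  assumes d: "d \<ge> 1"
  shows "(\<integral>\<^sup>+x. ennreal (chi2_density d x) \<partial>lborel) = 1"
proof -
  define a where "a = real d / 2"
  have a: "a > 0" using d by (simp add: a_def)
  have G: "Gamma a > 0" using a by (simp add: Gamma_real_pos)
  have "(\<integral>\<^sup>+x. ennreal (chi2_density d x) \<partial>lborel) = ennreal \<bar>2\<bar> * (\<integral>\<^sup>+x. ennreal (chi2_density d (0 + 2 * x)) \<partial>lborel)"
    by (rule nn_integral_real_affine) auto
  also have "\<dots> = (\<integral>\<^sup>+x. ennreal (2 * chi2_density d (2 * x)) \<partial>lborel)"
    by (subst nn_integral_cmult[symmetric]) (auto intro!: nn_integral_cong simp: ennreal_mult chi2_density_nonneg)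
  also have "\<dots> = (\<integral>\<^sup>+x. ennreal (1 / Gamma a) * ennreal (indicator {0..} x * x powr (a - 1) / exp x) \<partial>lborel)"
  proof (rule nn_integral_cong)
    fix x :: real
    show "ennreal (2 * chi2_density d (2 * x)) = ennreal (1 / Gamma a) * ennreal (indicator {0..} x * x powr (a - 1) / exp x)"
    proof (cases "x > 0")
      case True
      have "2 * chi2_density d (2 * x) = 2 * ((2 * x) powr (a - 1) * exp (- x) / (2 powr a * Gamma a))"
        using True by (simp add: chi2_density_def a_def)
      also have "(2 * x) powr (a - 1) = 2 powr (a - 1) * x powr (a - 1)"
        using True by (simp add: powr_mult)
      also have "2 powr a = 2 * 2 powr (a - 1)"
        by (simp add: powr_diff)
      finally have "2 * chi2_density d (2 * x) = x powr (a - 1) / exp x / Gamma a"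
        using G by (simp add: exp_minus field_simps)
      then show ?thesis using True G by (simp add: ennreal_mult[symmetric] divide_nonneg_nonneg)
    next
      case False
      then have "x \<le> 0" by simp
      then show ?thesis by (cases "x = 0") (simp_all add: chi2_density_def indicator_def)
    qed
  qed
  also have "\<dots> = ennreal (1 / Gamma a) * (\<integral>\<^sup>+x. ennreal (indicator {0..} x * x powr (a - 1) / exp x) \<partial>lborel)"
    by (rule nn_integral_cmult) measurable
  also have "(\<integral>\<^sup>+x. ennreal (indicator {0..} x * x powr (a - 1) / exp x) \<partial>lborel) = Gamma a"
    using Gamma_conv_nn_integral_real[OF a] by simp
  also have "ennreal (1 / Gamma a) * ennreal (Gamma a) = 1"
    using G by (simp add: ennreal_mult[symmetric])
  finally show ?thesis .
qed

lemma prob_space_chi2: "d \<ge> 1 \<Longrightarrow> prob_space (density lborel (\<lambda>x. ennreal (chi2_density d x)))"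
  by (rule prob_spaceI) (simp add: emeasure_density nn_integral_chi2)


lemma aux_rearr1:
  fixes x A1 A2 B1 B2 E1 E2 P1 P2 G1 G2 :: real
  shows "x * ((A1 * B1) * E1 / (P1 * G1) * ((A2 * B2) * E2 / (P2 * G2)))
       = (x * (A1 * A2)) * (B1 * B2) * (E1 * E2) / ((P1 * P2) * (G1 * G2))"
  by (simp add: field_simps)

lemma aux_rearr2:
  fixes X B E T G1 G2 G3 :: real
  assumes "G3 \<noteq> 0"
  shows "X * B * E / (T * (G1 * G2)) = (G3 / (G1 * G2)) * B * (X * E / (T * G3))"
  using assms by (simp add: field_simps)

lemma chi2_conv_pointwise:
  fixes x u :: real
  assumes x: "x > 0" and d: "d \<ge> 1"
  shows "x * (chi2_density 1 (x - x * u) * chi2_density d (x * u)) =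
     (Gamma ((real d + 1) / 2) / (Gamma (1/2) * Gamma (real d / 2))) *
     (if 0 < u \<and> u < 1 then (1 - u) powr (-1/2) * u powr (real d / 2 - 1) else 0) * chi2_density (d + 1) x"
proof (cases "0 < u \<and> u < 1")
  case False
  then have "u \<le> 0 \<or> u \<ge> 1" by auto
  then have "chi2_density 1 (x - x * u) = 0 \<or> chi2_density d (x * u) = 0"
  proof
    assume "u \<le> 0" then have "x * u \<le> 0" using x by (simp add: mult_nonneg_nonpos)
    then show ?thesis by (simp add: chi2_density_def)
  next
    assume "u \<ge> 1" then have "x - x * u \<le> 0" using x
      using mult_left_mono[of 1 u x] by simp
    then show ?thesis by (simp add: chi2_density_def)
  qed
  then show ?thesis using False by auto
next
  case True
  then have u0: "0 < u" and u1: "u < 1" by auto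
  define h where "h = real d / 2"
  have h: "h > 0" using d by (simp add: h_def)
  have G1: "Gamma (1/2::real) > 0" by (simp add: Gamma_real_pos)
  have G2: "Gamma h > 0" using h by (simp add: Gamma_real_pos)
  have G3: "Gamma (h + 1/2) > 0" using h by (intro Gamma_real_pos) simp
  have xu: "x * u > 0" "x - x * u > 0" using x u0 u1 by (auto simp: algebra_simps)
  have A1: "(x - x * u) powr (-1/2) = x powr (-1/2) * (1 - u) powr (-1/2)"
  proof -
    have "x - x * u = x * (1 - u)" by (simp add: algebra_simps)
    then show ?thesis using x u1 by (simp add: powr_mult)
  qed
  have A2: "(x * u) powr (h - 1) = x powr (h - 1) * u powr (h - 1)"
    using x u0 by (simp add: powr_mult)
  have E: "exp (- (x - x * u) / 2) * exp (- (x * u) / 2) = exp (- x / 2)"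
    by (simp add: exp_add[symmetric] field_simps)
  have X: "x * (x powr (-1/2) * x powr (h - 1)) = x powr (h + 1/2 - 1)"
  proof -
    have e0: "h + 1/2 - 1 = 1 + (-1/2) + (h - 1)" by simp
    have e1: "x powr 1 = x" using x by simp
    have "x powr (1 + (-1/2) + (h - 1)) = x powr 1 * x powr (-1/2) * x powr (h - 1)"
      by (simp only: powr_add)
    then show ?thesis unfolding e0 e1 by (simp only: mult.assoc)
  qed
  have T: "2 powr (1/2) * 2 powr h = (2::real) powr (h + 1/2)"
    by (simp add: powr_add[symmetric] add.commute)
  have c1: "chi2_density 1 (x - x * u) = (x - x * u) powr (-1/2) * exp (- (x - x * u) / 2) / (2 powr (1/2) * Gamma (1/2))"
    using xu by (simp add: chi2_density_def)
  have cd: "chi2_density d (x * u) = (x * u) powr (h - 1) * exp (- (x * u) / 2) / (2 powr h * Gamma h)"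
    using xu by (simp add: chi2_density_def h_def)
  have cd1: "chi2_density (d + 1) x = x powr (h + 1/2 - 1) * exp (- x / 2) / (2 powr (h + 1/2) * Gamma (h + 1/2))"
    using x by (simp add: chi2_density_def h_def add_divide_distrib ac_simps)
  have "x * (chi2_density 1 (x - x * u) * chi2_density d (x * u))
      = (x * (x powr (-1/2) * x powr (h - 1))) * ((1 - u) powr (-1/2) * u powr (h - 1))
        * (exp (- (x - x * u) / 2) * exp (- (x * u) / 2)) / ((2 powr (1/2) * 2 powr h) * (Gamma (1/2) * Gamma h))"
    unfolding c1 cd A1 A2 by (rule aux_rearr1)
  also have "\<dots> = x powr (h + 1/2 - 1) * ((1 - u) powr (-1/2) * u powr (h - 1)) * exp (- x / 2)
        / (2 powr (h + 1/2) * (Gamma (1/2) * Gamma h))"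
    unfolding X E T ..
  also have "\<dots> = (Gamma (h + 1/2) / (Gamma (1/2) * Gamma h)) * ((1 - u) powr (-1/2) * u powr (h - 1))
        * (x powr (h + 1/2 - 1) * exp (- x / 2) / (2 powr (h + 1/2) * Gamma (h + 1/2)))"
    using G3 by (intro aux_rearr2) simp
  finally show ?thesis using True unfolding cd1 by (simp add: h_def add_divide_distrib)
qed


lemma chi2_conv:
  assumes d: "d \<ge> 1"
  shows "(\<lambda>x. \<integral>\<^sup>+y. ennreal (chi2_density 1 (x - y)) * ennreal (chi2_density d y) \<partial>lborel)
       = (\<lambda>x. ennreal (chi2_density (d + 1) x))" (is "?conv = ?chi")
proof -
  define C where "C = Gamma ((real d + 1) / 2) / (Gamma (1/2) * Gamma (real d / 2))"
  define Gf where "Gf u = (if 0 < u \<and> u < 1 then (1 - u) powr (-1/2) * u powr (real d / 2 - 1) else 0)" for u :: real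
  define I where "I = (\<integral>\<^sup>+u. ennreal (Gf u) \<partial>lborel)"
  have C0: "C \<ge> 0" unfolding C_def using d
    by (intro divide_nonneg_nonneg mult_nonneg_nonneg less_imp_le[OF Gamma_real_pos]) auto
  have Gf0: "Gf u \<ge> 0" for u by (simp add: Gf_def)
  have mGf: "Gf \<in> borel_measurable borel" unfolding Gf_def by measurable
  have eq: "?conv x = ennreal C * I * ennreal (chi2_density (d + 1) x)" for x
  proof (cases "x > 0")
    case False
    have z: "ennreal (chi2_density 1 (x - y)) * ennreal (chi2_density d y) = 0" for y
      using False by (cases "y > 0") (auto simp: chi2_density_def)
    have zz: "(\<lambda>y. ennreal (chi2_density 1 (x - y)) * ennreal (chi2_density d y)) = (\<lambda>y. 0)"
      by (rule ext) (rule z)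
    have "?conv x = 0" by (subst zz) simp
    then show ?thesis using False by (simp add: chi2_density_def)
  next
    case True
    have "?conv x = (\<integral>\<^sup>+y. ennreal (chi2_density 1 (x - y) * chi2_density d y) \<partial>lborel)"
      by (simp add: ennreal_mult chi2_density_nonneg)
    also have "\<dots> = ennreal \<bar>x\<bar> * (\<integral>\<^sup>+u. ennreal (chi2_density 1 (x - (0 + x * u)) * chi2_density d (0 + x * u)) \<partial>lborel)"
      using True by (intro nn_integral_real_affine) auto
    also have "\<dots> = (\<integral>\<^sup>+u. ennreal (x * (chi2_density 1 (x - x * u) * chi2_density d (x * u))) \<partial>lborel)"
      using True by (subst nn_integral_cmult[symmetric]) (auto intro!: nn_integral_cong simp: ennreal_mult[symmetric] chi2_density_nonneg)
    also have "\<dots> = (\<integral>\<^sup>+u. ennreal (C * chi2_density (d + 1) x) * ennreal (Gf u) \<partial>lborel)"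
    proof (rule nn_integral_cong)
      fix u :: real
      have p: "x * (chi2_density 1 (x - x * u) * chi2_density d (x * u)) = C * Gf u * chi2_density (d + 1) x"
        unfolding C_def Gf_def by (rule chi2_conv_pointwise[OF True d])
      have "ennreal (C * chi2_density (d + 1) x) * ennreal (Gf u) = ennreal (C * chi2_density (d + 1) x * Gf u)"
        using C0 Gf0 chi2_density_nonneg by (simp add: ennreal_mult)
      then show "ennreal (x * (chi2_density 1 (x - x * u) * chi2_density d (x * u))) = ennreal (C * chi2_density (d + 1) x) * ennreal (Gf u)"
        unfolding p by (simp add: mult_ac)
    qed
    also have "\<dots> = ennreal (C * chi2_density (d + 1) x) * I"
      unfolding I_def using mGf by (intro nn_integral_cmult) measurable
    finally show ?thesis using C0 chi2_density_nonneg by (simp add: ennreal_mult mult_ac)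
  qed
  have eqf: "?conv = (\<lambda>x. ennreal C * I * ennreal (chi2_density (d + 1) x))"
    by (rule ext) (rule eq)
  have "prob_space (density lborel ?conv)"
    using d by (intro prob_space_convolution_density prob_space_chi2) auto
  then have "prob_space (density lborel (\<lambda>x. ennreal C * I * ennreal (chi2_density (d + 1) x)))"
    unfolding eqf .
  from prob_space.emeasure_space_1[OF this]
  have "1 = emeasure (density lborel (\<lambda>x. ennreal C * I * ennreal (chi2_density (d + 1) x))) UNIV"
    by simp
  also have "\<dots> = (\<integral>\<^sup>+x. ennreal C * I * ennreal (chi2_density (d + 1) x) \<partial>lborel)"
    by (subst emeasure_density) auto
  also have "\<dots> = ennreal C * I * (\<integral>\<^sup>+x. ennreal (chi2_density (d + 1) x) \<partial>lborel)"
    by (rule nn_integral_cmult) measurable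
  also have "(\<integral>\<^sup>+x. ennreal (chi2_density (d + 1) x) \<partial>lborel) = 1"
    using d by (intro nn_integral_chi2) simp
  finally have CI: "ennreal C * I = 1" by simp
  show ?thesis using eq CI by (simp add: fun_eq_iff)
qed


lemma chi1_pointwise:
  assumes u: "u > 0"
  shows "chi2_density 1 (u\<^sup>2) * (2 * u) = 2 * std_normal_density u"
proof -
  have "(u\<^sup>2) powr (1/2 - 1) = 1 / u"
  proof -
    have "(u\<^sup>2) powr (1/2 - 1) = (u\<^sup>2) powr (- (1/2))" by simp
    also have "\<dots> = 1 / (u\<^sup>2) powr (1/2)" by (rule powr_minus_divide)
    also have "(u\<^sup>2) powr (1/2) = sqrt (u\<^sup>2)" by (rule powr_half_sqrt) simp
    also have "sqrt (u\<^sup>2) = u" using u by simp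
    finally show ?thesis .
  qed
  moreover have "2 powr (1/2) * Gamma (1/2) = sqrt (2 * pi)"
    by (simp add: Gamma_one_half_real powr_half_sqrt real_sqrt_mult)
  ultimately show ?thesis using u
    by (simp add: chi2_density_def std_normal_density_def field_simps)
qed

lemma sq_stdN_emeasure:
  assumes x: "x \<ge> 0"
  shows "emeasure (distr stdN borel (\<lambda>a. a\<^sup>2)) {..x} = emeasure (density lborel (\<lambda>t. ennreal (chi2_density 1 t))) {..x}"
proof -
  define r where "r = sqrt x"
  have r: "r \<ge> 0" "r\<^sup>2 = x" using x by (auto simp: r_def)
  have "emeasure (distr stdN borel (\<lambda>a. a\<^sup>2)) {..x} = emeasure stdN ((\<lambda>a. a\<^sup>2) -` {..x} \<inter> space stdN)"
    by (rule emeasure_distr) auto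
  also have "(\<lambda>a. a\<^sup>2) -` {..x} \<inter> space stdN = {-r..r}"
    using r by (auto simp: abs_le_square_iff[symmetric] real_sqrt_le_iff simp del: abs_le_square_iff)
  also have "emeasure stdN {-r..r} = (\<integral>\<^sup>+a. ennreal (std_normal_density a) * indicator {-r..r} a \<partial>lborel)"
    unfolding stdN_def by (rule emeasure_density) auto
  also have "\<dots> = (\<integral>\<^sup>+a. ennreal (std_normal_density a) * indicator {-r..<0} a + ennreal (std_normal_density a) * indicator {0..r} a \<partial>lborel)"
    by (rule nn_integral_cong) (auto simp: indicator_def)
  also have "\<dots> = (\<integral>\<^sup>+a. ennreal (std_normal_density a) * indicator {-r..<0} a \<partial>lborel) + (\<integral>\<^sup>+a. ennreal (std_normal_density a) * indicator {0..r} a \<partial>lborel)"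
    by (rule nn_integral_add) auto
  also have "(\<integral>\<^sup>+a. ennreal (std_normal_density a) * indicator {-r..<0} a \<partial>lborel) = (\<integral>\<^sup>+a. ennreal (std_normal_density a) * indicator {0..r} a \<partial>lborel)"
  proof -
    have "(\<integral>\<^sup>+a. ennreal (std_normal_density a) * indicator {-r..<0} a \<partial>lborel)
        = ennreal \<bar>-1\<bar> * (\<integral>\<^sup>+a. ennreal (std_normal_density (0 + -1 * a)) * indicator {-r..<0} (0 + -1 * a) \<partial>lborel)"
      by (rule nn_integral_real_affine) auto
    also have "\<dots> = (\<integral>\<^sup>+a. ennreal (std_normal_density a) * indicator {0<..r} a \<partial>lborel)"
      by (auto intro!: nn_integral_cong simp: std_normal_density_def indicator_def)
    also have "\<dots> = (\<integral>\<^sup>+a. ennreal (std_normal_density a) * indicator {0..r} a \<partial>lborel)"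
      by (intro nn_integral_cong_AE eventually_mono[OF AE_lborel_singleton[of 0]]) (auto simp: indicator_def)
    finally show ?thesis .
  qed
  also have "(\<integral>\<^sup>+a. ennreal (std_normal_density a) * indicator {0..r} a \<partial>lborel) + (\<integral>\<^sup>+a. ennreal (std_normal_density a) * indicator {0..r} a \<partial>lborel)
     = (\<integral>\<^sup>+a. ennreal (2 * std_normal_density a * indicator {0..r} a) \<partial>lborel)"
    by (subst nn_integral_add[symmetric]) (auto intro!: nn_integral_cong simp: indicator_def ennreal_plus[symmetric] simp del: ennreal_plus)
  finally have L: "emeasure (distr stdN borel (\<lambda>a. a\<^sup>2)) {..x} = (\<integral>\<^sup>+a. ennreal (2 * std_normal_density a * indicator {0..r} a) \<partial>lborel)" .
  have "emeasure (density lborel (\<lambda>t. ennreal (chi2_density 1 t))) {..x} = (\<integral>\<^sup>+t. ennreal (chi2_density 1 t) * indicator {..x} t \<partial>lborel)"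
    by (rule emeasure_density) auto
  also have "\<dots> = (\<integral>\<^sup>+t. ennreal (chi2_density 1 t * indicator {0\<^sup>2..r\<^sup>2} t) \<partial>lborel)"
    using r by (intro nn_integral_cong) (auto simp: indicator_def chi2_density_def)
  also have "\<dots> = (\<integral>\<^sup>+u. ennreal (chi2_density 1 (u\<^sup>2) * (2 * u) * indicator {0..r} u) \<partial>lborel)"
  proof (rule nn_integral_substitution[where g="\<lambda>u. u\<^sup>2" and g'="\<lambda>u. 2 * u"])
    show "set_borel_measurable borel {0\<^sup>2..r\<^sup>2} (chi2_density 1)"
      unfolding set_borel_measurable_def by measurable
    show "((\<lambda>u. u\<^sup>2) has_real_derivative 2 * u) (at u)" for u :: real
      by (auto intro!: derivative_eq_intros)
    show "continuous_on {0..r} (\<lambda>u::real. 2 * u)" by (intro continuous_intros)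
  qed (use r in auto)
  also have "\<dots> = (\<integral>\<^sup>+a. ennreal (2 * std_normal_density a * indicator {0..r} a) \<partial>lborel)"
  proof (intro nn_integral_cong_AE eventually_mono[OF AE_lborel_singleton[of 0]] impI)
    fix u :: real assume "u \<noteq> 0"
    show "ennreal (chi2_density 1 (u\<^sup>2) * (2 * u) * indicator {0..r} u) = ennreal (2 * std_normal_density u * indicator {0..r} u)"
    proof (cases "u > 0")
      case True then show ?thesis by (subst chi1_pointwise[OF True]) (rule refl)
    next
      case False then show ?thesis using \<open>u \<noteq> 0\<close> by (simp add: indicator_def)
    qed
  qed
  finally show ?thesis using L by simp
qed


lemma sq_stdN_distr: "distr stdN borel (\<lambda>a. a\<^sup>2) = density lborel (\<lambda>t. ennreal (chi2_density 1 t))"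
proof (rule cdf_unique)
  interpret N: prob_space stdN by (rule prob_space_stdN)
  show "real_distribution (distr stdN borel (\<lambda>a. a\<^sup>2))" by simp
  interpret C: prob_space "density lborel (\<lambda>t. ennreal (chi2_density 1 t))"
    by (rule prob_space_chi2) simp
  show "real_distribution (density lborel (\<lambda>t. ennreal (chi2_density 1 t)))"
    by (unfold_locales) simp
  show "cdf (distr stdN borel (\<lambda>a. a\<^sup>2)) = cdf (density lborel (\<lambda>t. ennreal (chi2_density 1 t)))"
  proof (rule ext)
    fix x :: real
    show "cdf (distr stdN borel (\<lambda>a. a\<^sup>2)) x = cdf (density lborel (\<lambda>t. ennreal (chi2_density 1 t))) x"
    proof (cases "x \<ge> 0")
      case True
      then show ?thesis unfolding cdf_def measure_def using sq_stdN_emeasure[OF True] by simp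
    next
      case False
      have "emeasure (distr stdN borel (\<lambda>a. a\<^sup>2)) {..x} = emeasure stdN ((\<lambda>a. a\<^sup>2) -` {..x} \<inter> space stdN)"
        by (rule emeasure_distr) auto
      also have "(\<lambda>a. a\<^sup>2) -` {..x} \<inter> space stdN = {}"
        using False by auto (smt (verit) zero_le_power2)
      finally have 1: "emeasure (distr stdN borel (\<lambda>a. a\<^sup>2)) {..x} = 0" by simp
      have "emeasure (density lborel (\<lambda>t. ennreal (chi2_density 1 t))) {..x} = (\<integral>\<^sup>+t. ennreal (chi2_density 1 t) * indicator {..x} t \<partial>lborel)"
        by (rule emeasure_density) auto
      also have "(\<lambda>t. ennreal (chi2_density 1 t) * indicator {..x} t) = (\<lambda>t. 0)"
        using False by (intro ext) (auto simp: indicator_def chi2_density_def)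
      finally have 2: "emeasure (density lborel (\<lambda>t. ennreal (chi2_density 1 t))) {..x} = 0" by simp
      show ?thesis unfolding cdf_def measure_def using 1 2 by simp
    qed
  qed
qed

lemma distributed_sq_stdN: "distributed stdN lborel (\<lambda>a. a\<^sup>2) (\<lambda>t. ennreal (chi2_density 1 t))"
  unfolding distributed_def
proof (intro conjI)
  show "distr stdN lborel (\<lambda>a. a\<^sup>2) = density lborel (\<lambda>t. ennreal (chi2_density 1 t))"
    using sq_stdN_distr by (subst distr_cong[of _ _ _ borel]) auto
qed auto


lemma distr_pair_snd':
  assumes "prob_space M1" "sigma_finite_measure M2"
  shows "distr (M1 \<Otimes>\<^sub>M M2) M2 snd = M2"
proof (intro measure_eqI)
  interpret M1: prob_space M1 by fact
  interpret M2: sigma_finite_measure M2 by fact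
  fix A assume A: "A \<in> sets (distr (M1 \<Otimes>\<^sub>M M2) M2 snd)"
  from A have "emeasure (distr (M1 \<Otimes>\<^sub>M M2) M2 snd) A = emeasure (M1 \<Otimes>\<^sub>M M2) (space M1 \<times> A)"
    by (auto simp add: emeasure_distr space_pair_measure dest: sets.sets_into_space intro!: arg_cong2[where f=emeasure])
  with A show "emeasure (distr (M1 \<Otimes>\<^sub>M M2) M2 snd) A = emeasure M2 A"
    by (simp add: M2.emeasure_pair_measure_Times M1.emeasure_space_1)
qed simp

lemma pair_sum_distributed:
  fixes X :: "'a \<Rightarrow> real" and Y :: "'b \<Rightarrow> real"
  assumes M1: "prob_space M1" and M2: "prob_space M2"
    and X: "distributed M1 lborel X f" and Y: "distributed M2 lborel Y g"
  shows "distributed (M1 \<Otimes>\<^sub>M M2) lborel (\<lambda>z. X (fst z) + Y (snd z)) (\<lambda>x. \<integral>\<^sup>+y. f (x - y) * g y \<partial>lborel)"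
proof -
  interpret M1: prob_space M1 by fact
  interpret M2: prob_space M2 by fact
  interpret P: pair_prob_space M1 M2 ..
  have mX[measurable]: "X \<in> borel_measurable M1" using X by (simp add: distributed_def)
  have mY[measurable]: "Y \<in> borel_measurable M2" using Y by (simp add: distributed_def)
  have dX: "distr (M1 \<Otimes>\<^sub>M M2) borel (\<lambda>z. X (fst z)) = distr M1 borel X"
  proof -
    have "distr (M1 \<Otimes>\<^sub>M M2) borel (X \<circ> fst) = distr (distr (M1 \<Otimes>\<^sub>M M2) M1 fst) borel X"
      by (rule distr_distr[symmetric]) auto
    then show ?thesis by (simp add: M2.distr_pair_fst comp_def)
  qed
  have dY: "distr (M1 \<Otimes>\<^sub>M M2) borel (\<lambda>z. Y (snd z)) = distr M2 borel Y"
  proof -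
    have "distr (M1 \<Otimes>\<^sub>M M2) borel (Y \<circ> snd) = distr (distr (M1 \<Otimes>\<^sub>M M2) M2 snd) borel Y"
      by (rule distr_distr[symmetric]) auto
    then show ?thesis using distr_pair_snd'[OF M1 M2.sigma_finite_measure_axioms] by (simp add: comp_def)
  qed
  have ind: "P.indep_var borel (\<lambda>z. X (fst z)) borel (\<lambda>z. Y (snd z))"
    unfolding P.indep_var_distribution_eq
  proof (intro conjI)
    show "distr (M1 \<Otimes>\<^sub>M M2) borel (\<lambda>z. X (fst z)) \<Otimes>\<^sub>M distr (M1 \<Otimes>\<^sub>M M2) borel (\<lambda>z. Y (snd z)) =
      distr (M1 \<Otimes>\<^sub>M M2) (borel \<Otimes>\<^sub>M borel) (\<lambda>z. (X (fst z), Y (snd z)))"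
      unfolding dX dY
      by (subst pair_measure_distr) (auto intro!: prob_space_imp_sigma_finite M2.prob_space_distr simp: case_prod_beta')
  qed auto
  have dX': "distributed (M1 \<Otimes>\<^sub>M M2) lborel (\<lambda>z. X (fst z)) f"
    unfolding distributed_def
  proof (intro conjI)
    have "distr (M1 \<Otimes>\<^sub>M M2) lborel (\<lambda>z. X (fst z)) = distr M1 lborel X"
      using dX by (metis (no_types, lifting) distr_cong sets_lborel)
    then show "distr (M1 \<Otimes>\<^sub>M M2) lborel (\<lambda>z. X (fst z)) = density lborel f"
      using X by (simp add: distributed_def)
  qed (use X in \<open>auto simp: distributed_def\<close>)
  have dY': "distributed (M1 \<Otimes>\<^sub>M M2) lborel (\<lambda>z. Y (snd z)) g"
    unfolding distributed_def
  proof (intro conjI)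
    have "distr (M1 \<Otimes>\<^sub>M M2) lborel (\<lambda>z. Y (snd z)) = distr M2 lborel Y"
      using dY by (metis (no_types, lifting) distr_cong sets_lborel)
    then show "distr (M1 \<Otimes>\<^sub>M M2) lborel (\<lambda>z. Y (snd z)) = density lborel g"
      using Y by (simp add: distributed_def)
  qed (use Y in \<open>auto simp: distributed_def\<close>)
  show ?thesis using P.distributed_convolution[OF ind dX' dY'] .
qed


lemma chi_sum_PN:
  assumes "finite J" "J \<noteq> {}"
  shows "distributed (PN J) lborel (\<lambda>y. \<Sum>k\<in>J. (y k)\<^sup>2) (\<lambda>t. ennreal (chi2_density (card J) t))"
  using assms
proof (induction J rule: finite_ne_induct)
  case (singleton k)
  interpret PS: product_prob_space "\<lambda>_::'a. stdN"
    by (simp add: product_prob_space_def product_sigma_finite_def prob_space_imp_sigma_finite prob_space_stdN product_prob_space_axioms_def)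
  have D: "distr stdN (PN {k}) (\<lambda>x. \<lambda>i\<in>{k}. x) = PN {k}" by (rule PS.distr_component)
  have m1: "(\<lambda>x::real. \<lambda>i\<in>{k}. x) \<in> measurable stdN (PN {k})" by measurable
  have m2: "(\<lambda>y. \<Sum>k\<in>{k}. (y k)\<^sup>2) \<in> measurable (PN {k}) lborel" by measurable
  have "distr (PN {k}) lborel (\<lambda>y. \<Sum>k\<in>{k}. (y k)\<^sup>2) = distr (distr stdN (PN {k}) (\<lambda>x. \<lambda>i\<in>{k}. x)) lborel (\<lambda>y. \<Sum>k\<in>{k}. (y k)\<^sup>2)"
    using D by simp
  also have "\<dots> = distr stdN lborel ((\<lambda>y. \<Sum>k\<in>{k}. (y k)\<^sup>2) \<circ> (\<lambda>x. \<lambda>i\<in>{k}. x))"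
    using m2 m1 by (rule distr_distr)
  also have "((\<lambda>y. \<Sum>k\<in>{k}. (y k)\<^sup>2) \<circ> (\<lambda>x. \<lambda>i\<in>{k}. x)) = (\<lambda>a. a\<^sup>2)" by (auto simp: fun_eq_iff)
  also have "distr stdN lborel (\<lambda>a. a\<^sup>2) = density lborel (\<lambda>t. ennreal (chi2_density 1 t))"
    using distributed_sq_stdN by (simp add: distributed_def)
  finally show ?case unfolding distributed_def using m2 by simp
next
  case (insert k J')
  define d where "d = card J'"
  have d: "d \<ge> 1" using insert by (simp add: d_def Suc_le_eq card_gt_0_iff)
  have cardJ: "card (insert k J') = d + 1" using insert by (simp add: d_def)
  define upd where "upd = (\<lambda>(a::real, X::'a \<Rightarrow> real). X(k := a))"
  have D1: "distr (stdN \<Otimes>\<^sub>M PN J') (PN (insert k J')) upd = PN (insert k J')"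
    unfolding upd_def by (rule distr_pair_PiM_eq_PiM) (auto intro: prob_space_stdN)
  have mupd: "upd \<in> measurable (stdN \<Otimes>\<^sub>M PN J') (PN (insert k J'))"
  proof -
    have "(\<lambda>z. (\<lambda>(f, y). f(k := y)) (snd z, fst z)) \<in> measurable (stdN \<Otimes>\<^sub>M PN J') (PN (insert k J'))"
      by (rule measurable_compose[OF _ measurable_add_dim]) measurable
    then show ?thesis by (simp add: upd_def case_prod_beta')
  qed
  have mS: "(\<lambda>y. \<Sum>k\<in>insert k J'. (y k)\<^sup>2) \<in> measurable (PN (insert k J')) lborel" by measurable
  have comp: "((\<lambda>y. \<Sum>k\<in>insert k J'. (y k)\<^sup>2) \<circ> upd) z = (fst z)\<^sup>2 + (\<lambda>y. \<Sum>k\<in>J'. (y k)\<^sup>2) (snd z)" for z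
  proof -
    obtain a X where z: "z = (a, X)" by (metis prod.collapse)
    have "(\<Sum>i\<in>J'. ((X(k := a)) i)\<^sup>2) = (\<Sum>i\<in>J'. (X i)\<^sup>2)"
      using insert.hyps by (intro sum.cong) auto
    then show ?thesis using insert.hyps by (simp add: z upd_def)
  qed
  have conv: "distributed (stdN \<Otimes>\<^sub>M PN J') lborel (\<lambda>z. (fst z)\<^sup>2 + (\<lambda>y. \<Sum>k\<in>J'. (y k)\<^sup>2) (snd z))
      (\<lambda>x. \<integral>\<^sup>+y. ennreal (chi2_density 1 (x - y)) * ennreal (chi2_density d y) \<partial>lborel)"
    by (rule pair_sum_distributed[OF prob_space_stdN prob_space_PN distributed_sq_stdN]) (use insert.IH in \<open>simp add: d_def\<close>)
  then have conv': "distributed (stdN \<Otimes>\<^sub>M PN J') lborel (\<lambda>z. (fst z)\<^sup>2 + (\<lambda>y. \<Sum>k\<in>J'. (y k)\<^sup>2) (snd z))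
      (\<lambda>x. ennreal (chi2_density (d + 1) x))"
    unfolding chi2_conv[OF d] .
  have "distr (PN (insert k J')) lborel (\<lambda>y. \<Sum>k\<in>insert k J'. (y k)\<^sup>2)
      = distr (distr (stdN \<Otimes>\<^sub>M PN J') (PN (insert k J')) upd) lborel (\<lambda>y. \<Sum>k\<in>insert k J'. (y k)\<^sup>2)"
    using D1 by simp
  also have "\<dots> = distr (stdN \<Otimes>\<^sub>M PN J') lborel ((\<lambda>y. \<Sum>k\<in>insert k J'. (y k)\<^sup>2) \<circ> upd)"
    using mS mupd by (rule distr_distr)
  also have "((\<lambda>y. \<Sum>k\<in>insert k J'. (y k)\<^sup>2) \<circ> upd) = (\<lambda>z. (fst z)\<^sup>2 + (\<lambda>y. \<Sum>k\<in>J'. (y k)\<^sup>2) (snd z))"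
    using comp by (rule ext)
  also have "distr (stdN \<Otimes>\<^sub>M PN J') lborel (\<lambda>z. (fst z)\<^sup>2 + (\<lambda>y. \<Sum>k\<in>J'. (y k)\<^sup>2) (snd z)) = density lborel (\<lambda>x. ennreal (chi2_density (d + 1) x))"
    using conv' by (simp add: distributed_def)
  finally show ?case unfolding distributed_def cardJ using mS by simp
qed


lemma Qchi2_emeasure:
  assumes d: "d \<ge> 1"
  shows "emeasure (density lborel (\<lambda>x. ennreal (chi2_density d x))) {t<..} = ennreal (Qchi2 d t)"
proof -
  have int: "integrable lborel (\<lambda>x. indicator {t<..} x * chi2_density d x)"
  proof (rule integrableI_nonneg)
    show "AE x in lborel. 0 \<le> indicator {t<..} x * chi2_density d x"
      by (auto simp: chi2_density_nonneg)
    have "(\<integral>\<^sup>+x. ennreal (indicator {t<..} x * chi2_density d x) \<partial>lborel) \<le> (\<integral>\<^sup>+x. ennreal (chi2_density d x) \<partial>lborel)"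
      by (intro nn_integral_mono) (auto simp: indicator_def chi2_density_nonneg)
    also have "\<dots> = 1" using nn_integral_chi2[OF d] .
    finally show "(\<integral>\<^sup>+x. ennreal (indicator {t<..} x * chi2_density d x) \<partial>lborel) < \<infinity>"
      by (simp add: le_less_trans)
  qed measurable
  have "emeasure (density lborel (\<lambda>x. ennreal (chi2_density d x))) {t<..} = (\<integral>\<^sup>+x. ennreal (chi2_density d x) * indicator {t<..} x \<partial>lborel)"
    by (rule emeasure_density) auto
  also have "\<dots> = (\<integral>\<^sup>+x. ennreal (indicator {t<..} x * chi2_density d x) \<partial>lborel)"
    by (intro nn_integral_cong) (auto simp: indicator_def)
  also have "\<dots> = ennreal (\<integral>x. indicator {t<..} x * chi2_density d x \<partial>lborel)"
    using int by (intro nn_integral_eq_integral) (auto simp: chi2_density_nonneg)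
  also have "(\<integral>x. indicator {t<..} x * chi2_density d x \<partial>lborel) = Qchi2 d t"
    unfolding Qchi2_def set_lebesgue_integral_def by simp
  finally show ?thesis .
qed

lemma Qchi2_nonneg: "Qchi2 d t \<ge> 0"
  unfolding Qchi2_def set_lebesgue_integral_def
  by (intro integral_nonneg_AE) (auto simp: chi2_density_nonneg)

lemma chi_tail_PN:
  assumes "finite J" "J \<noteq> {}"
  shows "measure (PN J) {y \<in> space (PN J). t < (\<Sum>k\<in>J. (y k)\<^sup>2)} = Qchi2 (card J) t"
proof -
  have D: "distributed (PN J) lborel (\<lambda>y. \<Sum>k\<in>J. (y k)\<^sup>2) (\<lambda>t. ennreal (chi2_density (card J) t))"
    using chi_sum_PN[OF assms] .
  have c: "card J \<ge> 1" using assms by (simp add: Suc_le_eq card_gt_0_iff)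
  have m: "(\<lambda>y. \<Sum>k\<in>J. (y k)\<^sup>2) \<in> measurable (PN J) lborel" by measurable
  have "emeasure (PN J) {y \<in> space (PN J). t < (\<Sum>k\<in>J. (y k)\<^sup>2)} = emeasure (distr (PN J) lborel (\<lambda>y. \<Sum>k\<in>J. (y k)\<^sup>2)) {t<..}"
    using m by (subst emeasure_distr) (auto intro!: arg_cong[where f="emeasure (PN J)"])
  also have "\<dots> = emeasure (density lborel (\<lambda>t. ennreal (chi2_density (card J) t))) {t<..}"
    using D by (simp add: distributed_def)
  also have "\<dots> = ennreal (Qchi2 (card J) t)" by (rule Qchi2_emeasure[OF c])
  finally show ?thesis unfolding measure_def using Qchi2_nonneg by simp
qed



lemma orth_sum2':
  fixes q :: "'i \<Rightarrow> 'l \<Rightarrow> real"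
  assumes orth: "\<And>l l'. l \<in> B \<Longrightarrow> l' \<in> B \<Longrightarrow> (\<Sum>i\<in>A. q i l * q i l') = (if l = l' then 1 else 0)"
    and fin: "finite B"
  shows "(\<Sum>i\<in>A. (\<Sum>l\<in>B. q i l * a l) * (\<Sum>l\<in>B. q i l * b l)) = (\<Sum>l\<in>B. a l * b l)"
proof -
  have "(\<Sum>i\<in>A. (\<Sum>l\<in>B. q i l * a l) * (\<Sum>l\<in>B. q i l * b l)) = (\<Sum>i\<in>A. \<Sum>l\<in>B. \<Sum>l'\<in>B. (a l * b l') * (q i l * q i l'))"
    unfolding sum_product by (intro sum.cong refl) (simp add: algebra_simps)
  also have "\<dots> = (\<Sum>l\<in>B. \<Sum>i\<in>A. \<Sum>l'\<in>B. (a l * b l') * (q i l * q i l'))"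
    by (rule sum.swap)
  also have "\<dots> = (\<Sum>l\<in>B. \<Sum>l'\<in>B. \<Sum>i\<in>A. (a l * b l') * (q i l * q i l'))"
    by (rule sum.cong[OF refl]) (rule sum.swap)
  also have "\<dots> = (\<Sum>l\<in>B. \<Sum>l'\<in>B. (a l * b l') * (if l = l' then 1 else 0))"
    by (intro sum.cong refl) (simp add: sum_distrib_left[symmetric] orth)
  also have "\<dots> = (\<Sum>l\<in>B. a l * b l)"
    using fin by (simp add: if_distrib cong: if_cong)
  finally show ?thesis .
qed

lemma orth_sum1':
  fixes q :: "'i \<Rightarrow> 'l \<Rightarrow> real"
  assumes orth: "\<And>l l'. l \<in> B \<Longrightarrow> l' \<in> B \<Longrightarrow> (\<Sum>i\<in>A. q i l * q i l') = (if l = l' then 1 else 0)"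
    and fin: "finite B" and l: "l \<in> B"
  shows "(\<Sum>i\<in>A. q i l * (\<Sum>l'\<in>B. q i l' * b l')) = b l"
proof -
  have "(\<Sum>i\<in>A. q i l * (\<Sum>l'\<in>B. q i l' * b l')) = (\<Sum>i\<in>A. \<Sum>l'\<in>B. b l' * (q i l * q i l'))"
    by (simp add: sum_distrib_left algebra_simps)
  also have "\<dots> = (\<Sum>l'\<in>B. \<Sum>i\<in>A. b l' * (q i l * q i l'))"
    by (rule sum.swap)
  also have "\<dots> = (\<Sum>l'\<in>B. b l' * (if l = l' then 1 else 0))"
    by (intro sum.cong refl) (simp add: sum_distrib_left[symmetric] orth l)
  also have "\<dots> = b l"
    using fin l by (simp add: if_distrib cong: if_cong)
  finally show ?thesis .
qed

definition avec :: "nat \<Rightarrow> (nat \<Rightarrow> nat \<Rightarrow> real) \<Rightarrow> (nat \<Rightarrow> nat \<Rightarrow> real) \<Rightarrow> nat \<Rightarrow> nat \<Rightarrow> real" where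
  "avec N H u i k = (\<Sum>j<N. u i j * H j k)"

definition bvec :: "nat \<Rightarrow> (nat \<Rightarrow> nat \<Rightarrow> real) \<Rightarrow> (nat \<Rightarrow> nat \<Rightarrow> real) \<Rightarrow> nat \<Rightarrow> nat \<Rightarrow> nat \<Rightarrow> real" where
  "bvec M1 T u i m j = T m i * (\<Sum>l<M1. T m l * u l j)"

lemma avec_orth:
  assumes u_orthonormal: "\<And>i i'. i < N \<Longrightarrow> i' < N \<Longrightarrow> (\<Sum>j<N. u i j * u i' j) = (if i = i' then 1 else 0)"
    and u_eigen: "\<And>i l. i < N \<Longrightarrow> l < N \<Longrightarrow>
                    (\<Sum>j<N. (\<Sum>k<K. H l k * H j k) * u i j) = rho2 i * u i l"
    and i: "i < N" "i' < N"
  shows "(\<Sum>k<K. avec N H u i k * avec N H u i' k) = (if i = i' then rho2 i else 0)"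
proof -
  have "(\<Sum>k<K. avec N H u i k * avec N H u i' k) = (\<Sum>k<K. \<Sum>j<N. \<Sum>j'<N. u i j * u i' j' * (H j k * H j' k))"
    unfolding avec_def sum_product by (intro sum.cong refl) (simp add: algebra_simps)
  also have "\<dots> = (\<Sum>j<N. \<Sum>k<K. \<Sum>j'<N. u i j * u i' j' * (H j k * H j' k))" by (rule sum.swap)
  also have "\<dots> = (\<Sum>j<N. \<Sum>j'<N. \<Sum>k<K. u i j * u i' j' * (H j k * H j' k))"
    by (rule sum.cong[OF refl]) (rule sum.swap)
  also have "\<dots> = (\<Sum>j<N. u i j * (\<Sum>j'<N. (\<Sum>k<K. H j k * H j' k) * u i' j'))"
    by (intro sum.cong refl) (simp add: sum_distrib_left sum_distrib_right algebra_simps)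
  also have "\<dots> = (\<Sum>j<N. u i j * (rho2 i' * u i' j))"
    using u_eigen i by (intro sum.cong refl) simp
  also have "\<dots> = rho2 i' * (\<Sum>j<N. u i j * u i' j)"
    by (simp add: sum_distrib_left algebra_simps)
  also have "\<dots> = (if i = i' then rho2 i else 0)" using u_orthonormal[OF i] by simp
  finally show ?thesis .
qed

lemma bvec_orth:
  assumes u_orthonormal: "\<And>i i'. i < N \<Longrightarrow> i' < N \<Longrightarrow> (\<Sum>j<N. u i j * u i' j) = (if i = i' then 1 else 0)"
    and T_orth1: "\<And>i i'. i < M1 \<Longrightarrow> i' < M1 \<Longrightarrow> (\<Sum>j<M1. T j i * T j i') = (if i = i' then 1 else 0)"
    and T_orth2: "\<And>i i'. i < M1 \<Longrightarrow> i' < M1 \<Longrightarrow> (\<Sum>j<M1. T i j * T i' j) = (if i = i' then 1 else 0)"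
    and M1N: "M1 \<le> N" and i: "i < M1" "i' < M1"
  shows "(\<Sum>m<M1. \<Sum>j<N. bvec M1 T u i m j * bvec M1 T u i' m j) = (if i = i' then 1 else 0)"
proof -
  have inner: "(\<Sum>j<N. (\<Sum>l<M1. u l j * T m l) * (\<Sum>l<M1. u l j * T m l)) = 1" if m: "m < M1" for m
  proof -
    have "(\<Sum>j<N. (\<Sum>l<M1. u l j * T m l) * (\<Sum>l<M1. u l j * T m l)) = (\<Sum>l<M1. T m l * T m l)"
      by (rule orth_sum2') (use u_orthonormal M1N in auto)
    also have "\<dots> = 1" using T_orth2[OF m m] by simp
    finally show ?thesis .
  qed
  have "(\<Sum>m<M1. \<Sum>j<N. bvec M1 T u i m j * bvec M1 T u i' m j)
      = (\<Sum>m<M1. T m i * T m i' * (\<Sum>j<N. (\<Sum>l<M1. u l j * T m l) * (\<Sum>l<M1. u l j * T m l)))"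
    unfolding bvec_def by (intro sum.cong refl) (simp add: sum_distrib_left algebra_simps)
  also have "\<dots> = (\<Sum>m<M1. T m i * T m i')" using inner by simp
  also have "\<dots> = (if i = i' then 1 else 0)" using T_orth1[OF i] by simp
  finally show ?thesis .
qed


definition lam :: "real \<Rightarrow> real \<Rightarrow> (nat \<Rightarrow> real) \<Rightarrow> nat \<Rightarrow> real" where
  "lam s0 sx rho2 i = s0\<^sup>2 + sx\<^sup>2 * rho2 i"

definition evec :: "nat \<Rightarrow> nat \<Rightarrow> (nat \<Rightarrow> nat \<Rightarrow> real) \<Rightarrow> (nat \<Rightarrow> nat \<Rightarrow> real) \<Rightarrow> (nat \<Rightarrow> nat \<Rightarrow> real)
    \<Rightarrow> (nat \<Rightarrow> real) \<Rightarrow> real \<Rightarrow> real \<Rightarrow> nat \<times> nat \<Rightarrow> (nat \<times> nat) + (nat \<times> nat \<times> nat) \<Rightarrow> real" where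
  "evec N M1 H u T rho2 sx s0 p a = (case p of (i, n) \<Rightarrow>
     (case a of Inl (n', k) \<Rightarrow> if n' = n then sx * avec N H u i k / sqrt (lam s0 sx rho2 i) else 0
        | Inr (m, n', j) \<Rightarrow> if n' = n then s0 * bvec M1 T u i m j / sqrt (lam s0 sx rho2 i) else 0))"

definition Iset :: "nat \<Rightarrow> nat \<Rightarrow> nat \<Rightarrow> nat \<Rightarrow> ((nat \<times> nat) + (nat \<times> nat \<times> nat)) set" where
  "Iset Nb K M1 N = ({..<Nb} \<times> {..<K}) <+> ({..<M1} \<times> {..<Nb} \<times> {..<N})"

lemma finite_Iset[simp]: "finite (Iset Nb K M1 N)"
  by (simp add: Iset_def)

lemma delta_prod1:
  fixes f g :: "'k \<Rightarrow> real"
  assumes "finite A" "finite B" "n0 \<in> A" "n1 \<in> A"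
  shows "(\<Sum>(x, k)\<in>A \<times> B. (if x = n0 then f k else 0) * (if x = n1 then g k else 0)) = (if n0 = n1 then (\<Sum>k\<in>B. f k * g k) else 0)"
proof -
  have "(\<Sum>(x, k)\<in>A \<times> B. (if x = n0 then f k else 0) * (if x = n1 then g k else 0))
      = (\<Sum>x\<in>A. \<Sum>k\<in>B. (if x = n0 then f k else 0) * (if x = n1 then g k else 0))"
    by (simp add: sum.cartesian_product)
  also have "\<dots> = (\<Sum>x\<in>A. if x = n0 then (if n0 = n1 then (\<Sum>k\<in>B. f k * g k) else 0) else 0)"
    by (intro sum.cong refl) auto
  also have "\<dots> = (if n0 = n1 then (\<Sum>k\<in>B. f k * g k) else 0)"
    using assms by (simp add: sum.delta')
  finally show ?thesis .
qed

lemma delta_prod2: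
  fixes f g :: "'m \<Rightarrow> 'k \<Rightarrow> real"
  assumes "finite A" "finite B" "finite C" "n0 \<in> A" "n1 \<in> A"
  shows "(\<Sum>(m, x, k)\<in>C \<times> A \<times> B. (if x = n0 then f m k else 0) * (if x = n1 then g m k else 0))
       = (if n0 = n1 then (\<Sum>m\<in>C. \<Sum>k\<in>B. f m k * g m k) else 0)"
proof -
  have "(\<Sum>(m, x, k)\<in>C \<times> A \<times> B. (if x = n0 then f m k else 0) * (if x = n1 then g m k else 0))
      = (\<Sum>m\<in>C. \<Sum>(x, k)\<in>A \<times> B. (if x = n0 then f m k else 0) * (if x = n1 then g m k else 0))"
    by (subst sum.cartesian_product[symmetric]) (simp add: case_prod_beta')
  also have "\<dots> = (\<Sum>m\<in>C. if n0 = n1 then (\<Sum>k\<in>B. f m k * g m k) else 0)"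
    by (intro sum.cong refl delta_prod1) (use assms in auto)
  also have "\<dots> = (if n0 = n1 then (\<Sum>m\<in>C. \<Sum>k\<in>B. f m k * g m k) else 0)" by simp
  finally show ?thesis .
qed


lemma evec_orth:
  assumes u_orthonormal: "\<And>i i'. i < N \<Longrightarrow> i' < N \<Longrightarrow> (\<Sum>j<N. u i j * u i' j) = (if i = i' then 1 else 0)"
    and u_eigen: "\<And>i l. i < N \<Longrightarrow> l < N \<Longrightarrow>
                    (\<Sum>j<N. (\<Sum>k<K. H l k * H j k) * u i j) = rho2 i * u i l"
    and T_orth1: "\<And>i i'. i < M1 \<Longrightarrow> i' < M1 \<Longrightarrow> (\<Sum>j<M1. T j i * T j i') = (if i = i' then 1 else 0)"
    and T_orth2: "\<And>i i'. i < M1 \<Longrightarrow> i' < M1 \<Longrightarrow> (\<Sum>j<M1. T i j * T i' j) = (if i = i' then 1 else 0)"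
    and M1N: "M1 \<le> N" and s0: "s0 > 0" and rho0: "\<And>i. i < M1 \<Longrightarrow> rho2 i \<ge> 0"
    and p: "p \<in> {..<M1} \<times> {..<Nb}" and p': "p' \<in> {..<M1} \<times> {..<Nb}"
  shows "(\<Sum>a\<in>Iset Nb K M1 N. evec N M1 H u T rho2 sx s0 p a * evec N M1 H u T rho2 sx s0 p' a) = (if p = p' then 1 else 0)"
proof -
  obtain i n where pin: "p = (i, n)" and i: "i < M1" and n: "n < Nb" using p by auto
  obtain i' n' where pin': "p' = (i', n')" and i': "i' < M1" and n': "n' < Nb" using p' by auto
  define l where "l = sqrt (lam s0 sx rho2 i)"
  define l' where "l' = sqrt (lam s0 sx rho2 i')"
  have lpos: "lam s0 sx rho2 i > 0" using s0 rho0[OF i] by (simp add: lam_def add_pos_nonneg)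
  let ?e = "evec N M1 H u T rho2 sx s0"
  have Ipart: "(\<Sum>a\<in>{..<Nb} \<times> {..<K}. ?e p (Inl a) * ?e p' (Inl a))
      = (if n = n' then (\<Sum>k<K. (sx * avec N H u i k / l) * (sx * avec N H u i' k / l')) else 0)"
  proof -
    have "(\<Sum>a\<in>{..<Nb} \<times> {..<K}. ?e p (Inl a) * ?e p' (Inl a))
       = (\<Sum>(x, k)\<in>{..<Nb} \<times> {..<K}. (if x = n then sx * avec N H u i k / l else 0) * (if x = n' then sx * avec N H u i' k / l' else 0))"
      by (intro sum.cong refl) (auto simp: evec_def pin pin' l_def l'_def)
    also have "\<dots> = (if n = n' then (\<Sum>k<K. (sx * avec N H u i k / l) * (sx * avec N H u i' k / l')) else 0)"
      using n n' by (intro delta_prod1) auto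
    finally show ?thesis .
  qed
  have Wpart: "(\<Sum>a\<in>{..<M1} \<times> {..<Nb} \<times> {..<N}. ?e p (Inr a) * ?e p' (Inr a))
      = (if n = n' then (\<Sum>m<M1. \<Sum>j<N. (s0 * bvec M1 T u i m j / l) * (s0 * bvec M1 T u i' m j / l')) else 0)"
  proof -
    have "(\<Sum>a\<in>{..<M1} \<times> {..<Nb} \<times> {..<N}. ?e p (Inr a) * ?e p' (Inr a))
       = (\<Sum>(m, x, j)\<in>{..<M1} \<times> {..<Nb} \<times> {..<N}. (if x = n then s0 * bvec M1 T u i m j / l else 0) * (if x = n' then s0 * bvec M1 T u i' m j / l' else 0))"
      by (intro sum.cong refl) (auto simp: evec_def pin pin' l_def l'_def)
    also have "\<dots> = (if n = n' then (\<Sum>m<M1. \<Sum>j<N. (s0 * bvec M1 T u i m j / l) * (s0 * bvec M1 T u i' m j / l')) else 0)"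
      using n n' by (intro delta_prod2) auto
    finally show ?thesis .
  qed
  have A: "(\<Sum>k<K. (sx * avec N H u i k / l) * (sx * avec N H u i' k / l')) = sx\<^sup>2 / (l * l') * (if i = i' then rho2 i else 0)"
  proof -
    have "(\<Sum>k<K. (sx * avec N H u i k / l) * (sx * avec N H u i' k / l')) = sx\<^sup>2 / (l * l') * (\<Sum>k<K. avec N H u i k * avec N H u i' k)"
      by (simp add: sum_distrib_left power2_eq_square algebra_simps)
    also have "(\<Sum>k<K. avec N H u i k * avec N H u i' k) = (if i = i' then rho2 i else 0)"
      using i i' M1N by (intro avec_orth[OF u_orthonormal u_eigen]) auto
    finally show ?thesis .
  qed
  have B: "(\<Sum>m<M1. \<Sum>j<N. (s0 * bvec M1 T u i m j / l) * (s0 * bvec M1 T u i' m j / l')) = s0\<^sup>2 / (l * l') * (if i = i' then 1 else 0)"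
  proof -
    have "(\<Sum>m<M1. \<Sum>j<N. (s0 * bvec M1 T u i m j / l) * (s0 * bvec M1 T u i' m j / l')) = s0\<^sup>2 / (l * l') * (\<Sum>m<M1. \<Sum>j<N. bvec M1 T u i m j * bvec M1 T u i' m j)"
      by (simp add: sum_distrib_left power2_eq_square algebra_simps)
    also have "(\<Sum>m<M1. \<Sum>j<N. bvec M1 T u i m j * bvec M1 T u i' m j) = (if i = i' then 1 else 0)"
      using i i' by (intro bvec_orth[OF u_orthonormal T_orth1 T_orth2 M1N]) auto
    finally show ?thesis .
  qed
  have "(\<Sum>a\<in>Iset Nb K M1 N. ?e p a * ?e p' a) = (\<Sum>a\<in>{..<Nb} \<times> {..<K}. ?e p (Inl a) * ?e p' (Inl a)) + (\<Sum>a\<in>{..<M1} \<times> {..<Nb} \<times> {..<N}. ?e p (Inr a) * ?e p' (Inr a))"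
    unfolding Iset_def by (subst sum.Plus) (auto simp: comp_def)
  also have "\<dots> = (if p = p' then 1 else 0)"
  proof (cases "p = p'")
    case True
    then have ii: "i = i'" "n = n'" "l = l'" using pin pin' by (auto simp: l_def l'_def)
    have ll: "l * l = lam s0 sx rho2 i" using lpos by (simp add: l_def)
    show ?thesis unfolding Ipart Wpart A B using True ii ll lpos
      by (simp add: lam_def add_divide_distrib[symmetric])
  next
    case False
    then have "i \<noteq> i' \<or> n \<noteq> n'" using pin pin' by auto
    then show ?thesis unfolding Ipart Wpart A B using False by auto
  qed
  finally show ?thesis .
qed


lemma delta_single1:
  fixes f :: "'k \<Rightarrow> real"
  assumes "finite A" "finite B" "n \<in> A"
  shows "(\<Sum>(x, k)\<in>A \<times> B. (if x = n then f k else 0) * h x k) = (\<Sum>k\<in>B. f k * h n k)"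
proof -
  have "(\<Sum>(x, k)\<in>A \<times> B. (if x = n then f k else 0) * h x k) = (\<Sum>x\<in>A. \<Sum>k\<in>B. (if x = n then f k else 0) * h x k)"
    by (simp add: sum.cartesian_product)
  also have "\<dots> = (\<Sum>x\<in>A. if x = n then (\<Sum>k\<in>B. f k * h n k) else 0)"
    by (intro sum.cong refl) auto
  also have "\<dots> = (\<Sum>k\<in>B. f k * h n k)" using assms by (simp add: sum.delta')
  finally show ?thesis .
qed

lemma delta_single2:
  fixes f :: "'m \<Rightarrow> 'k \<Rightarrow> real"
  assumes "finite A" "finite B" "finite C" "n \<in> A"
  shows "(\<Sum>(m, x, k)\<in>C \<times> A \<times> B. (if x = n then f m k else 0) * h m x k) = (\<Sum>m\<in>C. \<Sum>k\<in>B. f m k * h m n k)"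
proof -
  have "(\<Sum>(m, x, k)\<in>C \<times> A \<times> B. (if x = n then f m k else 0) * h m x k)
      = (\<Sum>m\<in>C. \<Sum>(x, k)\<in>A \<times> B. (if x = n then f m k else 0) * h m x k)"
    by (subst sum.cartesian_product[symmetric]) (simp add: case_prod_beta')
  also have "\<dots> = (\<Sum>m\<in>C. \<Sum>k\<in>B. f m k * h m n k)"
    by (intro sum.cong refl delta_single1) (use assms in auto)
  finally show ?thesis .
qed

lemma stat_eq:
  assumes T_orth1: "\<And>i i'. i < M1 \<Longrightarrow> i' < M1 \<Longrightarrow> (\<Sum>j<M1. T j i * T j i') = (if i = i' then 1 else 0)"
    and T_orth2: "\<And>i i'. i < M1 \<Longrightarrow> i' < M1 \<Longrightarrow> (\<Sum>j<M1. T i j * T i' j) = (if i = i' then 1 else 0)"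
    and M1: "M1 \<ge> 1" and s0: "s0 > 0" and rho0: "\<And>i. i < M1 \<Longrightarrow> rho2 i \<ge> 0"
  shows "test_stat True N K M1 Nb (Phi_s M1 T u) H sx s0 (\<lambda>n k g. g (Inl (n, k))) (\<lambda>m n j g. g (Inr (m, n, j))) g
    = (\<Sum>p\<in>{..<M1} \<times> {..<Nb}. (lam s0 sx rho2 (fst p) / s0\<^sup>2) * (\<Sum>a\<in>Iset Nb K M1 N. evec N M1 H u T rho2 sx s0 p a * g a)\<^sup>2)"
proof -
  define z where "z m n = z_out True N K (Phi_s M1 T u) H sx s0 (\<lambda>n k g. g (Inl (n, k))) (\<lambda>m n j g. g (Inr (m, n, j))) m n g" for m n
  define xp where "xp n j = (\<Sum>k<K. H j k * (sx * g (Inl (n, k))))" for n j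
  define A where "A i n = (\<Sum>k<K. avec N H u i k * g (Inl (n, k)))" for i n
  define B where "B i n = (\<Sum>m<M1. \<Sum>j<N. bvec M1 T u i m j * g (Inr (m, n, j)))" for i n
  define Y where "Y i n = (\<Sum>m<M1. T m i * z m n)" for i n
  define V where "V i n = (\<Sum>a\<in>Iset Nb K M1 N. evec N M1 H u T rho2 sx s0 (i, n) a * g a)" for i n
  have zdef: "z m n = (\<Sum>j<N. Phi_s M1 T u m j * (xp n j + s0 * g (Inr (m, n, j))))" for m n
    by (simp add: z_def z_out_def xp_def)
  have S1: "(\<Sum>m<M1. (z m n)\<^sup>2) = (\<Sum>i<M1. (Y i n)\<^sup>2)" for n
  proof -
    have "(\<Sum>i<M1. (\<Sum>m<M1. T m i * z m n) * (\<Sum>m<M1. T m i * z m n)) = (\<Sum>m<M1. z m n * z m n)"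
      by (rule orth_sum2') (use T_orth2 in auto)
    then show ?thesis by (simp add: Y_def power2_eq_square)
  qed
  have S2: "Y i n = (sx * A i n + s0 * B i n) / sqrt (real M1)" if i: "i < M1" for i n
  proof -
    have "Y i n = (\<Sum>m<M1. T m i * (\<Sum>j<N. Phi_s M1 T u m j * xp n j)) + (\<Sum>m<M1. T m i * (\<Sum>j<N. Phi_s M1 T u m j * (s0 * g (Inr (m, n, j)))))"
      unfolding Y_def zdef by (simp add: distrib_left sum.distrib)
    also have "(\<Sum>m<M1. T m i * (\<Sum>j<N. Phi_s M1 T u m j * xp n j)) = (1 / sqrt (real M1)) * (\<Sum>m<M1. T m i * (\<Sum>l<M1. T m l * (\<Sum>j<N. u l j * xp n j)))"
    proof -
      have "(\<Sum>j<N. Phi_s M1 T u m j * xp n j) = (1 / sqrt (real M1)) * (\<Sum>l<M1. T m l * (\<Sum>j<N. u l j * xp n j))" for m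
      proof -
        have "(\<Sum>j<N. Phi_s M1 T u m j * xp n j) = (1 / sqrt (real M1)) * (\<Sum>j<N. \<Sum>l<M1. T m l * (u l j * xp n j))"
          by (simp add: Phi_s_def sum_distrib_left sum_distrib_right algebra_simps)
        also have "(\<Sum>j<N. \<Sum>l<M1. T m l * (u l j * xp n j)) = (\<Sum>l<M1. \<Sum>j<N. T m l * (u l j * xp n j))"
          by (rule sum.swap)
        also have "\<dots> = (\<Sum>l<M1. T m l * (\<Sum>j<N. u l j * xp n j))" by (simp add: sum_distrib_left)
        finally show ?thesis .
      qed
      then show ?thesis by (simp add: sum_distrib_left algebra_simps)
    qed
    also have "(\<Sum>m<M1. T m i * (\<Sum>l<M1. T m l * (\<Sum>j<N. u l j * xp n j))) = (\<Sum>j<N. u i j * xp n j)"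
      by (rule orth_sum1'[where q="\<lambda>m l. T m l"]) (use T_orth1 i in auto)
    also have "(\<Sum>j<N. u i j * xp n j) = sx * A i n"
    proof -
      have "(\<Sum>j<N. u i j * xp n j) = (\<Sum>j<N. \<Sum>k<K. sx * (u i j * H j k * g (Inl (n, k))))"
        by (simp add: xp_def sum_distrib_left algebra_simps)
      also have "\<dots> = (\<Sum>k<K. \<Sum>j<N. sx * (u i j * H j k * g (Inl (n, k))))" by (rule sum.swap)
      also have "\<dots> = sx * A i n" by (simp add: A_def avec_def sum_distrib_left sum_distrib_right algebra_simps)
      finally show ?thesis .
    qed
    also have "(\<Sum>m<M1. T m i * (\<Sum>j<N. Phi_s M1 T u m j * (s0 * g (Inr (m, n, j))))) = s0 * B i n / sqrt (real M1)"
      by (simp add: B_def bvec_def Phi_s_def sum_distrib_left sum_distrib_right algebra_simps sum_divide_distrib)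
    finally show ?thesis by (simp add: add_divide_distrib)
  qed
  have S3: "V i n = (sx * A i n + s0 * B i n) / sqrt (lam s0 sx rho2 i)" if n: "n < Nb" for i n
  proof -
    let ?l = "sqrt (lam s0 sx rho2 i)"
    have "V i n = (\<Sum>a\<in>{..<Nb} \<times> {..<K}. evec N M1 H u T rho2 sx s0 (i, n) (Inl a) * g (Inl a))
                + (\<Sum>a\<in>{..<M1} \<times> {..<Nb} \<times> {..<N}. evec N M1 H u T rho2 sx s0 (i, n) (Inr a) * g (Inr a))"
      unfolding V_def Iset_def by (subst sum.Plus) (auto simp: comp_def)
    also have "(\<Sum>a\<in>{..<Nb} \<times> {..<K}. evec N M1 H u T rho2 sx s0 (i, n) (Inl a) * g (Inl a))
        = (\<Sum>(x, k)\<in>{..<Nb} \<times> {..<K}. (if x = n then sx * avec N H u i k / ?l else 0) * g (Inl (x, k)))"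
      by (intro sum.cong refl) (auto simp: evec_def)
    also have "\<dots> = (\<Sum>k<K. (sx * avec N H u i k / ?l) * g (Inl (n, k)))"
      using n by (intro delta_single1) auto
    also have "(\<Sum>a\<in>{..<M1} \<times> {..<Nb} \<times> {..<N}. evec N M1 H u T rho2 sx s0 (i, n) (Inr a) * g (Inr a))
        = (\<Sum>(m, x, j)\<in>{..<M1} \<times> {..<Nb} \<times> {..<N}. (if x = n then s0 * bvec M1 T u i m j / ?l else 0) * g (Inr (m, x, j)))"
      by (intro sum.cong refl) (auto simp: evec_def)
    also have "\<dots> = (\<Sum>m<M1. \<Sum>j<N. (s0 * bvec M1 T u i m j / ?l) * g (Inr (m, n, j)))"
      using n by (intro delta_single2) auto
    finally show ?thesis
      by (simp add: A_def B_def add_divide_distrib sum_distrib_left sum_divide_distrib algebra_simps)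
  qed
  have S4: "(Y i n)\<^sup>2 = lam s0 sx rho2 i * (V i n)\<^sup>2 / real M1" if i: "i < M1" and n: "n < Nb" for i n
  proof -
    have lpos: "lam s0 sx rho2 i > 0" using s0 rho0[OF i] by (simp add: lam_def add_pos_nonneg)
    have "(Y i n)\<^sup>2 = (sx * A i n + s0 * B i n)\<^sup>2 / real M1" using S2[OF i] M1 by (simp add: power_divide)
    moreover have "(V i n)\<^sup>2 = (sx * A i n + s0 * B i n)\<^sup>2 / lam s0 sx rho2 i" using S3[OF n] lpos by (simp add: power_divide)
    ultimately show ?thesis using lpos by simp
  qed
  have "test_stat True N K M1 Nb (Phi_s M1 T u) H sx s0 (\<lambda>n k g. g (Inl (n, k))) (\<lambda>m n j g. g (Inr (m, n, j))) g
      = (\<Sum>n<Nb. \<Sum>m<M1. (z m n)\<^sup>2) / (s0\<^sup>2 / real M1)"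
    by (simp add: test_stat_def z_def)
  also have "(\<Sum>n<Nb. \<Sum>m<M1. (z m n)\<^sup>2) = (\<Sum>n<Nb. \<Sum>i<M1. lam s0 sx rho2 i * (V i n)\<^sup>2 / real M1)"
  proof (rule sum.cong[OF refl])
    fix n assume n: "n \<in> {..<Nb}"
    have "(\<Sum>m<M1. (z m n)\<^sup>2) = (\<Sum>i<M1. (Y i n)\<^sup>2)" by (rule S1)
    also have "\<dots> = (\<Sum>i<M1. lam s0 sx rho2 i * (V i n)\<^sup>2 / real M1)"
      using S4 n by (intro sum.cong refl) auto
    finally show "(\<Sum>m<M1. (z m n)\<^sup>2) = (\<Sum>i<M1. lam s0 sx rho2 i * (V i n)\<^sup>2 / real M1)" .
  qed
  also have "(\<Sum>n<Nb. \<Sum>i<M1. lam s0 sx rho2 i * (V i n)\<^sup>2 / real M1) / (s0\<^sup>2 / real M1)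
      = (\<Sum>n<Nb. \<Sum>i<M1. (lam s0 sx rho2 i / s0\<^sup>2) * (V i n)\<^sup>2)"
  proof -
    have e1: "(\<Sum>n<Nb. \<Sum>i<M1. lam s0 sx rho2 i * (V i n)\<^sup>2 / real M1) = (\<Sum>n<Nb. \<Sum>i<M1. lam s0 sx rho2 i * (V i n)\<^sup>2) / real M1"
      by (simp add: sum_divide_distrib)
    have e2: "(\<Sum>n<Nb. \<Sum>i<M1. (lam s0 sx rho2 i / s0\<^sup>2) * (V i n)\<^sup>2) = (\<Sum>n<Nb. \<Sum>i<M1. lam s0 sx rho2 i * (V i n)\<^sup>2) / s0\<^sup>2"
      by (simp add: sum_divide_distrib)
    show ?thesis unfolding e1 e2 using M1 by simp
  qed
  also have "\<dots> = (\<Sum>i<M1. \<Sum>n<Nb. (lam s0 sx rho2 i / s0\<^sup>2) * (V i n)\<^sup>2)" by (rule sum.swap)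
  also have "\<dots> = (\<Sum>p\<in>{..<M1} \<times> {..<Nb}. (lam s0 sx rho2 (fst p) / s0\<^sup>2) * (V (fst p) (snd p))\<^sup>2)"
    by (simp add: sum.cartesian_product case_prod_beta')
  finally show ?thesis by (simp add: V_def)
qed


lemma main_bounds:
  fixes M :: "'a measure"
    and N K M1 Nb :: nat
    and H :: "nat \<Rightarrow> nat \<Rightarrow> real"
    and u :: "nat \<Rightarrow> nat \<Rightarrow> real"
    and rho2 :: "nat \<Rightarrow> real"
    and T :: "nat \<Rightarrow> nat \<Rightarrow> real"
    and sx s0 \<gamma> :: real
    and X :: "nat \<Rightarrow> nat \<Rightarrow> 'a \<Rightarrow> real"
    and W :: "nat \<Rightarrow> nat \<Rightarrow> nat \<Rightarrow> 'a \<Rightarrow> real"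
  assumes "1 \<le> K"
    and u_orthonormal: "\<And>i i'. i < N \<Longrightarrow> i' < N \<Longrightarrow> (\<Sum>j<N. u i j * u i' j) = (if i = i' then 1 else 0)"
    and u_eigen: "\<And>i l. i < N \<Longrightarrow> l < N \<Longrightarrow>
                    (\<Sum>j<N. (\<Sum>k<K. H l k * H j k) * u i j) = rho2 i * u i l"
    and rho_sorted: "\<And>i j. i \<le> j \<Longrightarrow> j < N \<Longrightarrow> rho2 j \<le> rho2 i"
    and rho_nonneg: "rho2 (N - 1) \<ge> 0"
    and "1 \<le> M1" and "M1 \<le> N"
    and T_orth1: "\<And>i i'. i < M1 \<Longrightarrow> i' < M1 \<Longrightarrow> (\<Sum>j<M1. T j i * T j i') = (if i = i' then 1 else 0)"
    and T_orth2: "\<And>i i'. i < M1 \<Longrightarrow> i' < M1 \<Longrightarrow> (\<Sum>j<M1. T i j * T i' j) = (if i = i' then 1 else 0)"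
    and "1 \<le> Nb"
    and "sx \<ge> 0" and "s0 > 0" and "\<gamma> > 0"
    and "prob_space M"
    and indep: "prob_space.indep_vars M (\<lambda>_. borel)
                 (\<lambda>i. case i of Inl (n, k) \<Rightarrow> X n k | Inr (m, n, j) \<Rightarrow> W m n j)
                 (({..<Nb} \<times> {..<K}) <+> ({..<M1} \<times> {..<Nb} \<times> {..<N}))"
    and X_std: "\<And>n k. n < Nb \<Longrightarrow> k < K \<Longrightarrow> distributed M lborel (X n k) std_normal_density"
    and W_std: "\<And>m n j. m < M1 \<Longrightarrow> n < Nb \<Longrightarrow> j < N \<Longrightarrow> distributed M lborel (W m n j) std_normal_density"
  shows "Qchi2 (M1 * Nb) ((s0\<^sup>2 / (s0\<^sup>2 + sx\<^sup>2 * rho2 (M1 - 1))) * \<gamma>)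
           \<le> prob_space.prob M {\<omega> \<in> space M. test_stat True N K M1 Nb (Phi_s M1 T u) H sx s0 X W \<omega> > \<gamma>}
       \<and> prob_space.prob M {\<omega> \<in> space M. test_stat True N K M1 Nb (Phi_s M1 T u) H sx s0 X W \<omega> > \<gamma>}
           \<le> Qchi2 (M1 * Nb) ((s0\<^sup>2 / (s0\<^sup>2 + sx\<^sup>2 * rho2 0)) * \<gamma>)"
proof -
  interpret P: prob_space M by fact
  define I where "I = Iset Nb K M1 N"
  define J where "J = {..<M1} \<times> {..<Nb}"
  define G where "G = (\<lambda>i. case i of Inl (n, k) \<Rightarrow> X n k | Inr (m, n, j) \<Rightarrow> W m n j)"
  define Gv where "Gv \<omega> = (\<lambda>i\<in>I. G i \<omega>)" for \<omega>
  have finI: "finite I" by (simp add: I_def)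
  have finJ: "finite J" by (simp add: J_def)
  have "Inl (0, 0) \<in> I" using \<open>1 \<le> Nb\<close> \<open>1 \<le> K\<close> by (auto simp: I_def Iset_def)
  then have Ine: "I \<noteq> {}" by auto
  have "(0, 0) \<in> J" using \<open>1 \<le> Nb\<close> \<open>1 \<le> M1\<close> by (auto simp: J_def)
  then have Jne: "J \<noteq> {}" by auto
  have cardJ: "card J = M1 * Nb" by (simp add: J_def card_cartesian_product)
  have Gstd: "distr M borel (G i) = stdN" if "i \<in> I" for i
  proof -
    have "distributed M lborel (G i) std_normal_density"
      using that X_std W_std by (auto simp: G_def I_def Iset_def split: sum.splits)
    then have "distr M lborel (G i) = stdN" by (simp add: distributed_def stdN_def)
    then show ?thesis by (metis (no_types, lifting) distr_cong sets_lborel)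
  qed
  have Grv: "G i \<in> measurable M borel" if "i \<in> I" for i
  proof -
    have "distributed M lborel (G i) std_normal_density"
      using that X_std W_std by (auto simp: G_def I_def Iset_def split: sum.splits)
    then show ?thesis by (simp add: distributed_def)
  qed
  have law: "distr M (PN I) Gv = PN I"
  proof -
    have "distr M (\<Pi>\<^sub>M i\<in>I. borel) (\<lambda>x. \<lambda>i\<in>I. G i x) = (\<Pi>\<^sub>M i\<in>I. distr M borel (G i))"
      using P.indep_vars_iff_distr_eq_PiM'[OF Ine Grv] indep by (simp add: G_def I_def Iset_def)
    also have "(\<Pi>\<^sub>M i\<in>I. distr M borel (G i)) = PN I"
      using Gstd by (intro PiM_cong) auto
    finally have "distr M (\<Pi>\<^sub>M i\<in>I. borel) Gv = PN I" by (simp add: Gv_def[abs_def])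
    moreover have "distr M (\<Pi>\<^sub>M i\<in>I. borel) Gv = distr M (PN I) Gv"
      by (intro distr_cong refl sets_PiM_cong) auto
    ultimately show ?thesis by simp
  qed
  have M1N: "M1 \<le> N" by fact
  have rho0: "rho2 i \<ge> 0" if "i < M1" for i
  proof -
    have "rho2 (N - 1) \<le> rho2 i" using that M1N \<open>1 \<le> M1\<close> by (intro rho_sorted) auto
    then show ?thesis using rho_nonneg by simp
  qed
  define e where "e = evec N M1 H u T rho2 sx s0"
  define c where "c p = lam s0 sx rho2 (fst p) / s0\<^sup>2" for p :: "nat \<times> nat"
  define Le where "Le g = (\<lambda>p\<in>J. \<Sum>a\<in>I. e p a * g a)" for g
  define Q where "Q y = (\<Sum>p\<in>J. c p * (y p)\<^sup>2)" for y :: "nat \<times> nat \<Rightarrow> real"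
  define F where "F g = test_stat True N K M1 Nb (Phi_s M1 T u) H sx s0 (\<lambda>n k g. g (Inl (n, k))) (\<lambda>m n j g. g (Inr (m, n, j))) g" for g
  have FQ: "F g = Q (Le g)" for g
  proof -
    have "F g = (\<Sum>p\<in>{..<M1} \<times> {..<Nb}. (lam s0 sx rho2 (fst p) / s0\<^sup>2) * (\<Sum>a\<in>Iset Nb K M1 N. evec N M1 H u T rho2 sx s0 p a * g a)\<^sup>2)"
      unfolding F_def by (rule stat_eq[OF T_orth1 T_orth2 \<open>1 \<le> M1\<close> \<open>s0 > 0\<close> rho0])
    also have "\<dots> = Q (Le g)" unfolding Q_def Le_def c_def e_def J_def I_def by (intro sum.cong refl) auto
    finally show ?thesis .
  qed
  have zeq: "z_out True N K (Phi_s M1 T u) H sx s0 X W m n \<omega> = z_out True N K (Phi_s M1 T u) H sx s0 (\<lambda>n k g. g (Inl (n, k))) (\<lambda>m n j g. g (Inr (m, n, j))) m n (Gv \<omega>)"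
    if "m < M1" "n < Nb" for m n \<omega>
    unfolding z_out_def using that by (intro sum.cong refl) (auto intro!: sum.cong simp: Gv_def G_def I_def Iset_def)
  have tseq: "test_stat True N K M1 Nb (Phi_s M1 T u) H sx s0 X W \<omega> = F (Gv \<omega>)" for \<omega>
    unfolding F_def test_stat_def by (intro arg_cong2[where f="(/)"] sum.cong refl) (auto simp: zeq)
  have mGv: "Gv \<in> measurable M (PN I)"
    unfolding Gv_def
  proof (rule measurable_restrict)
    fix i assume "i \<in> I"
    have "measurable M stdN = measurable M borel" by (rule measurable_cong_sets) auto
    then show "G i \<in> measurable M stdN" using Grv[OF \<open>i \<in> I\<close>] by simp
  qed
  have mLe: "Le \<in> measurable (PN I) (PN J)"
    unfolding Le_def by (rule measurable_restrict) (use finI in measurable)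
  have mQ: "Q \<in> borel_measurable (PN J)" unfolding Q_def by measurable
  define S where "S = {y \<in> space (PN J). \<gamma> < Q y}"
  have Ssets: "S \<in> sets (PN J)" unfolding S_def using mQ by measurable
  have keyJ: "distr (PN I) (PN J) Le = PN J"
    unfolding Le_def using key_orth[OF finJ finI] evec_orth[OF u_orthonormal u_eigen T_orth1 T_orth2 M1N \<open>s0 > 0\<close> rho0]
    by (simp add: e_def J_def I_def)
  have prob_eq: "P.prob {\<omega> \<in> space M. test_stat True N K M1 Nb (Phi_s M1 T u) H sx s0 X W \<omega> > \<gamma>} = measure (PN J) S"
  proof -
    have "measure (PN J) S = measure (distr (PN I) (PN J) Le) S" using keyJ by simp
    also have "\<dots> = measure (PN I) (Le -` S \<inter> space (PN I))" using mLe Ssets by (rule measure_distr)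
    also have "\<dots> = measure (distr M (PN I) Gv) (Le -` S \<inter> space (PN I))" using law by simp
    also have "\<dots> = measure M (Gv -` (Le -` S \<inter> space (PN I)) \<inter> space M)"
      using mGv by (rule measure_distr) (use mLe Ssets in measurable)
    also have "Gv -` (Le -` S \<inter> space (PN I)) \<inter> space M = {\<omega> \<in> space M. test_stat True N K M1 Nb (Phi_s M1 T u) H sx s0 X W \<omega> > \<gamma>}"
      using measurable_space[OF mGv] measurable_space[OF mLe] by (auto simp: S_def tseq FQ)
    finally show ?thesis by simp
  qed
  interpret PJ: prob_space "PN J" by (rule prob_space_PN)
  define lo where "lo = lam s0 sx rho2 (M1 - 1)"
  define hi where "hi = lam s0 sx rho2 0"
  have lopos: "lo > 0" using rho0[of "M1 - 1"] \<open>1 \<le> M1\<close> \<open>s0 > 0\<close> by (simp add: lo_def lam_def add_pos_nonneg)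
  have hipos: "hi > 0" using rho0[of 0] \<open>1 \<le> M1\<close> \<open>s0 > 0\<close> by (simp add: hi_def lam_def add_pos_nonneg)
  have cbounds: "lo / s0\<^sup>2 \<le> c p \<and> c p \<le> hi / s0\<^sup>2" if "p \<in> J" for p
  proof -
    have i: "fst p < M1" using that by (auto simp: J_def)
    have "rho2 (M1 - 1) \<le> rho2 (fst p)" using i M1N by (intro rho_sorted) auto
    moreover have "rho2 (fst p) \<le> rho2 0" using i M1N by (intro rho_sorted) auto
    ultimately have "lo \<le> lam s0 sx rho2 (fst p)" "lam s0 sx rho2 (fst p) \<le> hi"
      by (auto simp: lo_def hi_def lam_def intro!: mult_left_mono)
    then show ?thesis by (auto simp: c_def divide_right_mono)
  qed
  define SS where "SS t = {y \<in> space (PN J). t < (\<Sum>k\<in>J. (y k)\<^sup>2)}" for t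
  have SSm: "SS t \<in> sets (PN J)" for t unfolding SS_def by measurable
  have SSQ: "measure (PN J) (SS t) = Qchi2 (M1 * Nb) t" for t
    unfolding SS_def cardJ[symmetric] by (rule chi_tail_PN[OF finJ Jne])
  have Qlo: "lo / s0\<^sup>2 * (\<Sum>k\<in>J. (y k)\<^sup>2) \<le> Q y" for y
    unfolding Q_def sum_distrib_left using cbounds by (intro sum_mono mult_right_mono) auto
  have Qhi: "Q y \<le> hi / s0\<^sup>2 * (\<Sum>k\<in>J. (y k)\<^sup>2)" for y
    unfolding Q_def sum_distrib_left using cbounds by (intro sum_mono mult_right_mono) auto
  have sub1: "SS ((s0\<^sup>2 / lo) * \<gamma>) \<subseteq> S"
  proof
    fix y assume "y \<in> SS ((s0\<^sup>2 / lo) * \<gamma>)"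
    then have y: "y \<in> space (PN J)" and lt: "(s0\<^sup>2 / lo) * \<gamma> < (\<Sum>k\<in>J. (y k)\<^sup>2)" by (auto simp: SS_def)
    have "\<gamma> = lo / s0\<^sup>2 * ((s0\<^sup>2 / lo) * \<gamma>)" using lopos \<open>s0 > 0\<close> by simp
    also have "\<dots> < lo / s0\<^sup>2 * (\<Sum>k\<in>J. (y k)\<^sup>2)" using lt lopos \<open>s0 > 0\<close> by (intro mult_strict_left_mono) auto
    also have "\<dots> \<le> Q y" by (rule Qlo)
    finally show "y \<in> S" using y by (simp add: S_def)
  qed
  have sub2: "S \<subseteq> SS ((s0\<^sup>2 / hi) * \<gamma>)"
  proof
    fix y assume "y \<in> S"
    then have y: "y \<in> space (PN J)" and lt: "\<gamma> < Q y" by (auto simp: S_def)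
    have "\<gamma> < hi / s0\<^sup>2 * (\<Sum>k\<in>J. (y k)\<^sup>2)" using lt Qhi[of y] by simp
    then have "(s0\<^sup>2 / hi) * \<gamma> < (s0\<^sup>2 / hi) * (hi / s0\<^sup>2 * (\<Sum>k\<in>J. (y k)\<^sup>2))"
      using hipos \<open>s0 > 0\<close> by (intro mult_strict_left_mono) auto
    also have "\<dots> = (\<Sum>k\<in>J. (y k)\<^sup>2)" using hipos \<open>s0 > 0\<close> by simp
    finally show "y \<in> SS ((s0\<^sup>2 / hi) * \<gamma>)" using y by (simp add: SS_def)
  qed
  have "Qchi2 (M1 * Nb) ((s0\<^sup>2 / lo) * \<gamma>) \<le> measure (PN J) S"
    unfolding SSQ[symmetric] using sub1 Ssets by (rule PJ.finite_measure_mono)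
  moreover have "measure (PN J) S \<le> Qchi2 (M1 * Nb) ((s0\<^sup>2 / hi) * \<gamma>)"
    unfolding SSQ[symmetric] using sub2 SSm by (rule PJ.finite_measure_mono)
  ultimately show ?thesis using prob_eq by (simp add: lo_def hi_def lam_def)
qed

theorem proposition1:
  fixes M :: "'a measure"
    and N K M1 Nb :: nat
    and H :: "nat \<Rightarrow> nat \<Rightarrow> real"
    and u :: "nat \<Rightarrow> nat \<Rightarrow> real"
    and rho2 :: "nat \<Rightarrow> real"
    and T :: "nat \<Rightarrow> nat \<Rightarrow> real"
    and sx s0 \<gamma> :: real
    and X :: "nat \<Rightarrow> nat \<Rightarrow> 'a \<Rightarrow> real"
    and W :: "nat \<Rightarrow> nat \<Rightarrow> nat \<Rightarrow> 'a \<Rightarrow> real"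
  assumes "1 \<le> K" and "K \<le> N"
    and full_rank: "\<And>c. (\<forall>i<N. (\<Sum>k<K. H i k * c k) = 0) \<Longrightarrow> (\<forall>k<K. c k = 0)"
    and u_orthonormal: "\<And>i i'. i < N \<Longrightarrow> i' < N \<Longrightarrow> (\<Sum>j<N. u i j * u i' j) = (if i = i' then 1 else 0)"
    and u_eigen: "\<And>i l. i < N \<Longrightarrow> l < N \<Longrightarrow>
                    (\<Sum>j<N. (\<Sum>k<K. H l k * H j k) * u i j) = rho2 i * u i l"
    and rho_sorted: "\<And>i j. i \<le> j \<Longrightarrow> j < N \<Longrightarrow> rho2 j \<le> rho2 i"
    and rho_nonneg: "rho2 (N - 1) \<ge> 0"
    and rho_distinct: "rho2 0 > rho2 (N - 1)"
    and "1 \<le> M1" and "M1 \<le> N"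
    and T_orth1: "\<And>i i'. i < M1 \<Longrightarrow> i' < M1 \<Longrightarrow> (\<Sum>j<M1. T j i * T j i') = (if i = i' then 1 else 0)"
    and T_orth2: "\<And>i i'. i < M1 \<Longrightarrow> i' < M1 \<Longrightarrow> (\<Sum>j<M1. T i j * T i' j) = (if i = i' then 1 else 0)"
    and "1 \<le> Nb"
    and "sx \<ge> 0" and "s0 > 0" and "\<gamma> > 0"
    and "prob_space M"
    and indep: "prob_space.indep_vars M (\<lambda>_. borel)
                 (\<lambda>i. case i of Inl (n, k) \<Rightarrow> X n k | Inr (m, n, j) \<Rightarrow> W m n j)
                 (({..<Nb} \<times> {..<K}) <+> ({..<M1} \<times> {..<Nb} \<times> {..<N}))"
    and X_std: "\<And>n k. n < Nb \<Longrightarrow> k < K \<Longrightarrow> distributed M lborel (X n k) std_normal_density"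
    and W_std: "\<And>m n j. m < M1 \<Longrightarrow> n < Nb \<Longrightarrow> j < N \<Longrightarrow> distributed M lborel (W m n j) std_normal_density"
  shows "prob_space.prob M {\<omega> \<in> space M. test_stat False N K M1 Nb (Phi_s M1 T u) H sx s0 X W \<omega> > \<gamma>}
           = Qchi2 (M1 * Nb) \<gamma>
       \<and> Qchi2 (M1 * Nb) ((s0\<^sup>2 / (s0\<^sup>2 + sx\<^sup>2 * rho2 (M1 - 1))) * \<gamma>)
           \<le> prob_space.prob M {\<omega> \<in> space M. test_stat True N K M1 Nb (Phi_s M1 T u) H sx s0 X W \<omega> > \<gamma>}
       \<and> prob_space.prob M {\<omega> \<in> space M. test_stat True N K M1 Nb (Phi_s M1 T u) H sx s0 X W \<omega> > \<gamma>}
           \<le> Qchi2 (M1 * Nb) ((s0\<^sup>2 / (s0\<^sup>2 + sx\<^sup>2 * rho2 0)) * \<gamma>)"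
  proof -
  have eq0: "test_stat False N K M1 Nb (Phi_s M1 T u) H sx s0 X W \<omega> = test_stat True N K M1 Nb (Phi_s M1 T u) H 0 s0 X W \<omega>" for \<omega>
    by (simp add: test_stat_def z_out_def)
  note B0 = main_bounds[OF assms(1) u_orthonormal u_eigen rho_sorted rho_nonneg assms(9) assms(10) T_orth1 T_orth2 assms(13)
     order_refl[of "0::real"] assms(15) assms(16) assms(17) indep X_std W_std]
  note B1 = main_bounds[OF assms(1) u_orthonormal u_eigen rho_sorted rho_nonneg assms(9) assms(10) T_orth1 T_orth2 assms(13)
     assms(14) assms(15) assms(16) assms(17) indep X_std W_std]
  have s1: "s0\<^sup>2 / (s0\<^sup>2 + 0\<^sup>2 * r) = 1" for r :: real using assms(15) by simp
  have "prob_space.prob M {\<omega> \<in> space M. test_stat False N K M1 Nb (Phi_s M1 T u) H sx s0 X W \<omega> > \<gamma>}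
      = prob_space.prob M {\<omega> \<in> space M. test_stat True N K M1 Nb (Phi_s M1 T u) H 0 s0 X W \<omega> > \<gamma>}"
    by (simp only: eq0)
  also have "\<dots> = Qchi2 (M1 * Nb) \<gamma>"
    using B0 unfolding s1 by simp
  finally show ?thesis using B1 by simp
qed

end
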